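(* Let $\mu$ be a Borel probability measure on $\mathbb{R}^d$ with a $C^1$ density $f$ such that both $f$ and $\|\nabla f\|$ are bounded. Then for all $\rho\in(0,1)$ and $x\in\mathbb{R}^d$ the equation $F_{\rho,\mu}(x,\sigma)=0$ has a unique solution $\sigma=\sigma^*_{\rho,\mu}(x)>0$. Moreover, $x\mapsto\sigma^*_{\rho,\mu}(x)$ is smooth.
   Context: For $x\in\mathbb{R}^d$, $\sigma>0$: $F_{\rho,\mu}(x,\sigma)=\int w_{x,\sigma}(x')\log w_{x,\sigma}(x')\,d\mu(x')+\log\rho$, where $w_{x,\sigma}(x')=\exp(-\|x-x'\|^2/2\sigma^2)/\int\exp(-\|x-z\|^2/2\sigma^2)\,d\mu(z)$. *)

theory Defs
  imports "HOL-Analysis.Analysis" "HOL-Probability.Probability"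
begin

definition gauss_w :: "'a::euclidean_space measure \<Rightarrow> 'a \<Rightarrow> real \<Rightarrow> 'a \<Rightarrow> real" where
  "gauss_w \<mu> x \<sigma> x' =
     exp (- (norm (x - x'))\<^sup>2 / (2 * \<sigma>\<^sup>2)) /
     (\<integral>z. exp (- (norm (x - z))\<^sup>2 / (2 * \<sigma>\<^sup>2)) \<partial>\<mu>)"

definition F_fun :: "real \<Rightarrow> 'a::euclidean_space measure \<Rightarrow> 'a \<Rightarrow> real \<Rightarrow> real" where
  "F_fun \<rho> \<mu> x \<sigma> =
     (\<integral>x'. gauss_w \<mu> x \<sigma> x' * ln (gauss_w \<mu> x \<sigma> x') \<partial>\<mu>) + ln \<rho>"

fun Ck_on :: "nat \<Rightarrow> 'a::real_normed_vector set \<Rightarrow> ('a \<Rightarrow> real) \<Rightarrow> bool" where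
  "Ck_on 0 S g = continuous_on S g"
| "Ck_on (Suc n) S g =
     (\<exists>g'. (\<forall>x\<in>S. (g has_derivative g' x) (at x)) \<and> (\<forall>v. Ck_on n S (\<lambda>x. g' x v)))"

definition smooth_on :: "'a::real_normed_vector set \<Rightarrow> ('a \<Rightarrow> real) \<Rightarrow> bool" where
  "smooth_on S g \<longleftrightarrow> (\<forall>k. Ck_on k S g)"

end

theory Submission
  imports Defs
begin

lemma Ck_mono: "Ck_on (Suc n) S g \<Longrightarrow> Ck_on n S g"
proof (induction n arbitrary: g)
  case 0
  then obtain g' where "\<forall>x\<in>S. (g has_derivative g' x) (at x)" by auto
  then show ?case
    by (auto intro!: continuous_at_imp_continuous_on dest: has_derivative_continuous)
next
  case (Suc n)
  then show ?case by (metis Ck_on.simps(2))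
qed

lemma Ck_const: "Ck_on n S (\<lambda>x. c)"
proof (induction n arbitrary: c)
  case 0 then show ?case by simp
next
  case (Suc n)
  show ?case unfolding Ck_on.simps
    by (rule exI[of _ "\<lambda>x v. 0"]) (auto intro: Suc)
qed

lemma Ck_add: "Ck_on n S f \<Longrightarrow> Ck_on n S g \<Longrightarrow> Ck_on n S (\<lambda>x. f x + g x)"
proof (induction n arbitrary: f g)
  case 0 then show ?case by (auto intro: continuous_on_add)
next
  case (Suc n)
  from Suc.prems obtain f' g' where f: "\<forall>x\<in>S. (f has_derivative f' x) (at x)" "\<forall>v. Ck_on n S (\<lambda>x. f' x v)"
    and g: "\<forall>x\<in>S. (g has_derivative g' x) (at x)" "\<forall>v. Ck_on n S (\<lambda>x. g' x v)" by auto
  show ?case unfolding Ck_on.simps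
    by (rule exI[of _ "\<lambda>x v. f' x v + g' x v"]) (use f g in \<open>auto intro: Suc.IH has_derivative_add\<close>)
qed

lemma Ck_mult: "Ck_on n S f \<Longrightarrow> Ck_on n S g \<Longrightarrow> Ck_on n S (\<lambda>x. f x * g x)"
proof (induction n arbitrary: f g)
  case 0 then show ?case by (auto intro: continuous_on_mult)
next
  case (Suc n)
  from Suc.prems obtain f' g' where f: "\<forall>x\<in>S. (f has_derivative f' x) (at x)" "\<forall>v. Ck_on n S (\<lambda>x. f' x v)"
    and g: "\<forall>x\<in>S. (g has_derivative g' x) (at x)" "\<forall>v. Ck_on n S (\<lambda>x. g' x v)" by auto
  have fn: "Ck_on n S f" and gn: "Ck_on n S g" using Suc.prems Ck_mono by blast+
  show ?case unfolding Ck_on.simps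
    apply (rule exI[of _ "\<lambda>x v. f x * g' x v + f' x v * g x"])
    using f g fn gn by (auto intro!: Suc.IH Ck_add has_derivative_mult)
qed

lemma Ck_neg: "Ck_on n S f \<Longrightarrow> Ck_on n S (\<lambda>x. - f x)"
  using Ck_mult[OF Ck_const[of n S "-1"], of f] by simp

lemma Ck_inverse: "Ck_on n S f \<Longrightarrow> (\<forall>x\<in>S. f x \<noteq> 0) \<Longrightarrow> Ck_on n S (\<lambda>x. inverse (f x))"
proof (induction n arbitrary: f)
  case 0 then show ?case by (auto intro: continuous_on_inverse)
next
  case (Suc n)
  from Suc.prems obtain f' where f: "\<forall>x\<in>S. (f has_derivative f' x) (at x)" "\<forall>v. Ck_on n S (\<lambda>x. f' x v)"
    by auto
  have fn: "Ck_on n S f" using Suc.prems Ck_mono by blast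
  have IH: "Ck_on n S (\<lambda>x. inverse (f x))" using Suc.IH[OF fn] Suc.prems by blast
  show ?case unfolding Ck_on.simps
    apply (rule exI[of _ "\<lambda>x v. - (inverse (f x) * f' x v * inverse (f x))"])
    using f IH Suc.prems by (auto intro!: Ck_mult Ck_neg has_derivative_inverse')
qed

lemma Ck_ln: "Ck_on n S f \<Longrightarrow> (\<forall>x\<in>S. f x > 0) \<Longrightarrow> Ck_on n S (\<lambda>x. ln (f x))"
proof (induction n arbitrary: f)
  case 0 then show ?case by (auto intro!: continuous_on_ln)
next
  case (Suc n)
  from Suc.prems obtain f' where f: "\<forall>x\<in>S. (f has_derivative f' x) (at x)" "\<forall>v. Ck_on n S (\<lambda>x. f' x v)"
    by auto
  have fn: "Ck_on n S f" using Suc.prems Ck_mono by blast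
  have inv: "Ck_on n S (\<lambda>x. inverse (f x))" using Ck_inverse[OF fn] Suc.prems by force
  show ?case unfolding Ck_on.simps
    apply (rule exI[of _ "\<lambda>x v. f' x v * inverse (f x)"])
    using f inv Suc.prems by (auto intro!: Ck_mult has_derivative_ln)
qed

lemma Ck_cong: "open S \<Longrightarrow> (\<And>x. x \<in> S \<Longrightarrow> f x = g x) \<Longrightarrow> Ck_on n S f \<Longrightarrow> Ck_on n S g"
proof (induction n arbitrary: f g)
  case 0 then show ?case using continuous_on_cong by force
next
  case (Suc n)
  from Suc.prems obtain f' where f: "\<forall>x\<in>S. (f has_derivative f' x) (at x)" "\<forall>v. Ck_on n S (\<lambda>x. f' x v)"
    by auto
  show ?case unfolding Ck_on.simps
    apply (rule exI[of _ f'])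
    using f Suc.prems by (auto intro: has_derivative_transform_within_open)
qed

lemma lin_pair_split:
  assumes "bounded_linear (L :: 'a::real_normed_vector \<times> real \<Rightarrow> real)"
  shows "L (v, w) = L (v, 0) + w * L (0, 1)"
proof -
  interpret bounded_linear L by fact
  have e: "(v, 0) + w *\<^sub>R (0, 1) = (v, w)" by simp
  have "L ((v, 0) + w *\<^sub>R (0, 1)) = L (v, 0) + w * L (0, 1)" by (simp only: add scale) simp
  then show ?thesis by (simp only: e)
qed

lemma implicit_deriv:
  fixes G :: "'a::euclidean_space \<times> real \<Rightarrow> real"
  defines "U \<equiv> (UNIV :: 'a set) \<times> {0<..}"
  assumes der: "\<And>p. p \<in> U \<Longrightarrow> (G has_derivative G' p) (at p)"
    and cont: "continuous_on U G"
    and dec: "\<And>x s1 s2. 0 < s1 \<Longrightarrow> s1 < s2 \<Longrightarrow> G (x, s2) < G (x, s1)"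
    and ex: "\<And>x. \<exists>s>0. G (x, s) = 0"
    and nz: "\<And>p. p \<in> U \<Longrightarrow> G' p (0, 1) \<noteq> 0"
  defines "\<phi> \<equiv> (\<lambda>x. THE s. s > 0 \<and> G (x, s) = 0)"
  shows "\<phi> x > 0 \<and> G (x, \<phi> x) = 0"
    and "(\<phi> has_derivative (\<lambda>v. - G' (x, \<phi> x) (v, 0) / G' (x, \<phi> x) (0, 1))) (at x)"
proof -
  have uniq: "s1 = s2" if "s1 > 0" "s2 > 0" "G (y, s1) = G (y, s2)" for y s1 s2
    using dec[of s1 s2 y] dec[of s2 s1 y] that by (cases s1 s2 rule: linorder_cases) auto
  have the_eq: "(THE s. s > 0 \<and> G (y, s) = c) = s0" if "s0 > 0" "G (y, s0) = c" for y c s0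
    using that uniq by (intro the_equality) auto
  show ph: "\<phi> x > 0 \<and> G (x, \<phi> x) = 0"
  proof -
    obtain s where s: "s > 0" "G (x, s) = 0" using ex by blast
    then have "\<phi> x = s" unfolding \<phi>_def using the_eq by blast
    with s show ?thesis by simp
  qed
  define f where "f = (\<lambda>p. (fst p, G p))"
  define g where "g = (\<lambda>q. (fst q, THE s. s > 0 \<and> G (fst q, s) = snd q))"
  define p where "p = (x, \<phi> x)"
  have pU: "p \<in> U" using ph unfolding p_def U_def by auto
  define f' where "f' = (\<lambda>v. (fst v, G' p v))"
  define g' where "g' = (\<lambda>w. (fst w, (snd w - G' p (fst w, 0)) / G' p (0, 1)))"
  have bl: "bounded_linear (G' p)" using der[OF pU] has_derivative_bounded_linear by blast
  have openU: "open U" unfolding U_def by (intro open_Times) auto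
  have "(g has_derivative g') (at (f p))"
  proof (rule has_derivative_inverse_strong[OF openU pU])
    show "continuous_on U f" unfolding f_def
      by (intro continuous_on_Pair continuous_on_fst continuous_on_id cont)
    show "g (f q) = q" if qU: "q \<in> U" for q
    proof -
      obtain y s where q: "q = (y, s)" "s > 0" using qU unfolding U_def by (cases q) auto
      show ?thesis unfolding f_def g_def q using the_eq[of s y "G (y, s)"] q by simp
    qed
    show "(f has_derivative f') (at p)" unfolding f_def f'_def
      by (intro has_derivative_Pair has_derivative_fst[OF has_derivative_ident] der pU)
    show "f' \<circ> g' = id"
    proof (rule ext, clarsimp simp: f'_def g'_def)
      fix a b
      have "G' p (a, (b - G' p (a, 0)) / G' p (0, 1)) = G' p (a, 0) + (b - G' p (a, 0)) / G' p (0, 1) * G' p (0, 1)"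
        by (rule lin_pair_split[OF bl])
      also have "\<dots> = b" using nz[OF pU] by simp
      finally show "G' p (a, (b - G' p (a, 0)) / G' p (0, 1)) = b" .
    qed
  qed
  moreover have fp: "f p = (x, 0)" unfolding f_def p_def using ph by simp
  ultimately have gd: "(g has_derivative g') (at (x, 0))" by simp
  have e0: "((\<lambda>y. (y, 0::real)) has_derivative (\<lambda>v. (v, 0))) (at x)"
    by (intro has_derivative_Pair has_derivative_ident has_derivative_const)
  have "((\<lambda>y. snd (g (y, 0))) has_derivative (\<lambda>v. snd (g' (v, 0)))) (at x)"
    using has_derivative_snd[OF diff_chain_at[OF e0 gd[folded fp[symmetric]]]] fp by (simp add: o_def)
  moreover have "(\<lambda>y. snd (g (y, 0))) = \<phi>" unfolding g_def \<phi>_def by simp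
  moreover have "(\<lambda>v. snd (g' (v, 0))) = (\<lambda>v. - G' (x, \<phi> x) (v, 0) / G' (x, \<phi> x) (0, 1))"
    unfolding g'_def p_def by auto
  ultimately show "(\<phi> has_derivative (\<lambda>v. - G' (x, \<phi> x) (v, 0) / G' (x, \<phi> x) (0, 1))) (at x)" by simp
qed

lemma Ck_compose:
  fixes G :: "'a::real_normed_vector \<times> real \<Rightarrow> real" and \<phi> :: "'a \<Rightarrow> real"
  assumes "open U" "Ck_on n U G" "Ck_on n UNIV \<phi>" "\<forall>x. (x, \<phi> x) \<in> U"
  shows "Ck_on n UNIV (\<lambda>x. G (x, \<phi> x))"
  using assms(2-4)
proof (induction n arbitrary: G \<phi>)
  case 0
  then show ?case
  proof -
    have "continuous_on UNIV (\<lambda>x. (x, \<phi> x))"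
      using 0 by (intro continuous_on_Pair continuous_on_id) simp
    then show ?thesis
      using continuous_on_compose2[of U G UNIV "\<lambda>x. (x, \<phi> x)"] 0 by auto
  qed
next
  case (Suc n)
  from Suc.prems obtain G' where G: "\<forall>p\<in>U. (G has_derivative G' p) (at p)" "\<forall>v. Ck_on n U (\<lambda>p. G' p v)"
    by auto
  from Suc.prems obtain \<phi>' where ph: "\<forall>x. (\<phi> has_derivative \<phi>' x) (at x)" "\<forall>v. Ck_on n UNIV (\<lambda>x. \<phi>' x v)"
    by auto
  have phn: "Ck_on n UNIV \<phi>" using Suc.prems Ck_mono by blast
  have der: "((\<lambda>x. G (x, \<phi> x)) has_derivative (\<lambda>v. G' (x, \<phi> x) (v, 0) + \<phi>' x v * G' (x, \<phi> x) (0, 1))) (at x)" for x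
  proof -
    have p: "((\<lambda>x. (x, \<phi> x)) has_derivative (\<lambda>v. (v, \<phi>' x v))) (at x)"
      using ph(1) by (auto intro!: has_derivative_Pair has_derivative_ident)
    have g: "(G has_derivative G' (x, \<phi> x)) (at (x, \<phi> x))" using G(1) Suc.prems(3) by auto
    have "((G \<circ> (\<lambda>x. (x, \<phi> x))) has_derivative (G' (x, \<phi> x) \<circ> (\<lambda>v. (v, \<phi>' x v)))) (at x)"
      by (rule diff_chain_at[OF p g])
    moreover have "(G' (x, \<phi> x) \<circ> (\<lambda>v. (v, \<phi>' x v))) = (\<lambda>v. G' (x, \<phi> x) (v, 0) + \<phi>' x v * G' (x, \<phi> x) (0, 1))"
      by (rule ext) (simp only: o_def lin_pair_split[OF has_derivative_bounded_linear[OF g], of _ "\<phi>' x _"])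
    ultimately show ?thesis by (simp add: o_def)
  qed
  show ?case unfolding Ck_on.simps
    apply (rule exI[of _ "\<lambda>x v. G' (x, \<phi> x) (v, 0) + \<phi>' x v * G' (x, \<phi> x) (0, 1)"])
  proof (intro conjI allI ballI)
    fix v
    have a: "Ck_on n UNIV (\<lambda>x. G' (x, \<phi> x) (v, 0))"
      using Suc.IH[of "\<lambda>p. G' p (v, 0)" \<phi>] G phn Suc.prems(3) by blast
    have b: "Ck_on n UNIV (\<lambda>x. G' (x, \<phi> x) (0, 1))"
      using Suc.IH[of "\<lambda>p. G' p (0, 1)" \<phi>] G phn Suc.prems(3) by blast
    show "Ck_on n UNIV (\<lambda>x. G' (x, \<phi> x) (v, 0) + \<phi>' x v * G' (x, \<phi> x) (0, 1))"
      by (rule Ck_add[OF a Ck_mult[OF _ b]]) (use ph in blast)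
  qed (use der in auto)
qed


lemma Ck_frechet:
  assumes "open S" "Ck_on (Suc k) S G"
  shows "Ck_on k S (\<lambda>p. frechet_derivative G (at p) v)"
proof -
  from assms(2) obtain G' where G: "\<forall>p\<in>S. (G has_derivative G' p) (at p)" "\<forall>v. Ck_on k S (\<lambda>p. G' p v)"
    by auto
  show ?thesis
    by (rule Ck_cong[OF assms(1) _ G(2)[rule_format, of v]]) (metis G(1) frechet_derivative_at)
qed

lemma smooth_implicit:
  fixes G :: "'a::euclidean_space \<times> real \<Rightarrow> real"
  defines "U \<equiv> (UNIV :: 'a set) \<times> {0<..}"
  assumes smooth: "\<And>k. Ck_on k U G"
    and dec: "\<And>x s1 s2. 0 < s1 \<Longrightarrow> s1 < s2 \<Longrightarrow> G (x, s2) < G (x, s1)"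
    and ex: "\<And>x. \<exists>s>0. G (x, s) = 0"
    and nz: "\<And>p. p \<in> U \<Longrightarrow> frechet_derivative G (at p) (0, 1) \<noteq> 0"
  shows "Ck_on k UNIV (\<lambda>x. THE s. s > 0 \<and> G (x, s) = 0)"
proof -
  define \<phi> where "\<phi> = (\<lambda>x. THE s. s > 0 \<and> G (x, s) = 0)"
  define G' where "G' = (\<lambda>p. frechet_derivative G (at p))"
  have openU: "open U" unfolding U_def by (intro open_Times) auto
  have der: "(G has_derivative G' p) (at p)" if "p \<in> U" for p
  proof -
    from smooth[of 1] that obtain D where "(G has_derivative D) (at p)" by auto
    then show ?thesis unfolding G'_def using frechet_derivative_at by metis
  qed
  have cont: "continuous_on U G" using smooth[of 0] by simp
  have nz': "G' p (0, 1) \<noteq> 0" if "p \<in> UNIV \<times> {0<..}" for p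
    using nz[of p] that unfolding G'_def U_def by simp
  note imp = implicit_deriv[of G G', OF der[unfolded U_def] cont[unfolded U_def] dec ex nz',
      folded U_def]
  have pos: "\<forall>x. (x, \<phi> x) \<in> U" using imp(1) unfolding U_def \<phi>_def by auto
  have "Ck_on k UNIV \<phi>"
  proof (induction k)
    case 0
    show ?case using imp(2) unfolding \<phi>_def[symmetric]
      by (auto intro!: continuous_at_imp_continuous_on dest: has_derivative_continuous)
  next
    case (Suc k)
    show ?case unfolding Ck_on.simps
    proof (intro exI[of _ "\<lambda>x v. - G' (x, \<phi> x) (v, 0) * inverse (G' (x, \<phi> x) (0, 1))"] conjI allI ballI)
      fix x show "(\<phi> has_derivative (\<lambda>v. - G' (x, \<phi> x) (v, 0) * inverse (G' (x, \<phi> x) (0, 1)))) (at x)"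
        using imp(2)[of x] unfolding \<phi>_def[symmetric] by (simp add: divide_inverse \<phi>_def)
    next
      fix v
      have a: "Ck_on k UNIV (\<lambda>x. G' (x, \<phi> x) (v, 0))"
        unfolding G'_def by (rule Ck_compose[OF openU Ck_frechet[OF openU smooth] Suc pos])
      have b: "Ck_on k UNIV (\<lambda>x. G' (x, \<phi> x) (0, 1))"
        unfolding G'_def by (rule Ck_compose[OF openU Ck_frechet[OF openU smooth] Suc pos])
      have b': "Ck_on k UNIV (\<lambda>x. inverse (G' (x, \<phi> x) (0, 1)))"
        by (rule Ck_inverse[OF b]) (use nz pos in \<open>auto simp: G'_def\<close>)
      show "Ck_on k UNIV (\<lambda>x. - G' (x, \<phi> x) (v, 0) * inverse (G' (x, \<phi> x) (0, 1)))"
        by (rule Ck_mult[OF Ck_neg[OF a] b'])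
    qed
  qed
  then show ?thesis unfolding \<phi>_def .
qed

lemma tendsto_integral_at:
  fixes h :: "'pp::first_countable_topology \<Rightarrow> 'mm \<Rightarrow> real"
  assumes fin: "finite_measure M"
    and ev: "\<forall>\<^sub>F q in at p within S. h q \<in> borel_measurable M \<and> (\<forall>y\<in>space M. \<bar>h q y\<bar> \<le> B)"
    and lim: "\<And>y. y \<in> space M \<Longrightarrow> ((\<lambda>q. h q y) \<longlongrightarrow> g y) (at p within S)"
    and gm: "g \<in> borel_measurable M"
  shows "((\<lambda>q. \<integral>y. h q y \<partial>M) \<longlongrightarrow> (\<integral>y. g y \<partial>M)) (at p within S)"
  unfolding tendsto_at_iff_sequentially
proof (intro allI impI)
  interpret finite_measure M by fact
  fix X :: "nat \<Rightarrow> 'pp" assume X: "\<forall>i. X i \<in> S - {p}" "X \<longlonglongrightarrow> p"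
  have fX: "filterlim X (at p within S) sequentially"
    using X by (auto simp: filterlim_at)
  from filterlim_iff[THEN iffD1, OF fX, rule_format, OF ev]
  obtain N where N: "\<And>n. N \<le> n \<Longrightarrow> h (X n) \<in> borel_measurable M \<and> (\<forall>y\<in>space M. \<bar>h (X n) y\<bar> \<le> B)"
    by (auto simp: eventually_sequentially)
  have "(\<lambda>n. \<integral>y. h (X (n + N)) y \<partial>M) \<longlonglongrightarrow> (\<integral>y. g y \<partial>M)"
  proof (rule integral_dominated_convergence[where w="\<lambda>_. B"])
    show "g \<in> borel_measurable M" by fact
    show "h (X (n + N)) \<in> borel_measurable M" for n using N[of "n + N"] by simp
    show "integrable M (\<lambda>_. B)" by simp
    show "AE y in M. (\<lambda>n. h (X (n + N)) y) \<longlonglongrightarrow> g y"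
    proof (rule AE_I2)
      fix y assume y: "y \<in> space M"
      have "(\<lambda>n. h (X n) y) \<longlonglongrightarrow> g y"
        using filterlim_compose[OF lim[OF y] fX] by (simp add: o_def)
      then show "(\<lambda>n. h (X (n + N)) y) \<longlonglongrightarrow> g y"
        by (rule LIMSEQ_ignore_initial_segment)
    qed
    show "AE y in M. norm (h (X (n + N)) y) \<le> B" for n
      using N[of "n + N"] by (auto intro!: AE_I2)
  qed
  then show "((\<lambda>q. \<integral>y. h q y \<partial>M) \<circ> X) \<longlonglongrightarrow> (\<integral>y. g y \<partial>M)"
    unfolding o_def by (rule LIMSEQ_offset)
qed

lemma deriv_integral:
  fixes h :: "'pp::euclidean_space \<Rightarrow> 'mm \<Rightarrow> real"
  assumes fin: "finite_measure M" and e: "0 < e" and C0: "0 \<le> C"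
    and der: "\<And>q y. q \<in> ball p e \<Longrightarrow> y \<in> space M \<Longrightarrow> ((\<lambda>q. h q y) has_derivative h' q y) (at q)"
    and bnd: "\<And>q y v. q \<in> ball p e \<Longrightarrow> y \<in> space M \<Longrightarrow> \<bar>h' q y v\<bar> \<le> C * norm v"
    and meas: "\<And>q. q \<in> ball p e \<Longrightarrow> h q \<in> borel_measurable M"
    and meas': "\<And>v. (\<lambda>y. h' p y v) \<in> borel_measurable M"
    and int: "integrable M (h p)"
  shows "((\<lambda>q. \<integral>y. h q y \<partial>M) has_derivative (\<lambda>v. \<integral>y. h' p y v \<partial>M)) (at p)"
proof -
  interpret finite_measure M by fact
  have pb: "p \<in> ball p e" using e by simp
  have lip: "\<bar>h q y - h p y\<bar> \<le> C * norm (q - p)" if q: "q \<in> ball p e" and y: "y \<in> space M" for q y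
  proof -
    have "norm (h q y - h p y) \<le> C * norm (q - p)"
    proof (rule differentiable_bound[of "ball p e" "\<lambda>q. h q y" "\<lambda>q. h' q y"])
      show "convex (ball p e)" by simp
      show "((\<lambda>q. h q y) has_derivative h' q y) (at q within ball p e)" if "q \<in> ball p e" for q
        using der[OF that y] by (rule has_derivative_at_withinI)
      show "onorm (h' q y) \<le> C" if "q \<in> ball p e" for q
        using bnd[OF that y] by (intro onorm_le) simp
    qed (use q pb in auto)
    then show ?thesis by simp
  qed
  have intq: "integrable M (h q)" if q: "q \<in> ball p e" for q
  proof (rule Bochner_Integration.integrable_bound[where f = "\<lambda>y. \<bar>h p y\<bar> + C * norm (q - p)"])
    show "integrable M (\<lambda>y. \<bar>h p y\<bar> + C * norm (q - p))" using int by auto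
    show "h q \<in> borel_measurable M" using meas q .
    show "AE y in M. norm (h q y) \<le> norm (\<bar>h p y\<bar> + C * norm (q - p))"
    proof (rule AE_I2)
      fix y assume y: "y \<in> space M"
      from lip[OF q y] show "norm (h q y) \<le> norm (\<bar>h p y\<bar> + C * norm (q - p))" by auto
    qed
  qed
  have lin: "linear (h' p y)" if "y \<in> space M" for y
    using der[OF pb that] has_derivative_linear by blast
  have inth': "integrable M (\<lambda>y. h' p y v)" for v
    by (rule integrable_const_bound[where B = "C * norm v"]) (use bnd[OF pb] meas' in auto)
  have bl: "bounded_linear (\<lambda>v. \<integral>y. h' p y v \<partial>M)"
  proof (rule bounded_linear_intro[where K = "C * measure M (space M)"])
    fix a b
    have "(\<integral>y. h' p y (a + b) \<partial>M) = (\<integral>y. h' p y a + h' p y b \<partial>M)"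
      by (rule Bochner_Integration.integral_cong) (auto simp: linear_add[OF lin])
    also have "\<dots> = (\<integral>y. h' p y a \<partial>M) + (\<integral>y. h' p y b \<partial>M)"
      by (rule Bochner_Integration.integral_add[OF inth' inth'])
    finally show "(\<integral>y. h' p y (a + b) \<partial>M) = (\<integral>y. h' p y a \<partial>M) + (\<integral>y. h' p y b \<partial>M)" .
  next
    fix r a
    have "(\<integral>y. h' p y (r *\<^sub>R a) \<partial>M) = (\<integral>y. r * h' p y a \<partial>M)"
      by (rule Bochner_Integration.integral_cong) (auto simp: linear_scale[OF lin])
    then show "(\<integral>y. h' p y (r *\<^sub>R a) \<partial>M) = r *\<^sub>R (\<integral>y. h' p y a \<partial>M)" by simp
  next
    fix a
    have "norm (\<integral>y. h' p y a \<partial>M) \<le> (\<integral>y. norm (h' p y a) \<partial>M)"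
      by (rule Bochner_Integration.integral_norm_bound)
    also have "\<dots> \<le> (\<integral>y. C * norm a \<partial>M)"
      by (rule Bochner_Integration.integral_mono) (use inth' bnd[OF pb] in auto)
    also have "\<dots> = norm a * (C * measure M (space M))" by simp
    finally show "norm (\<integral>y. h' p y a \<partial>M) \<le> norm a * (C * measure M (space M))" .
  qed
  define \<phi> where "\<phi> q y = \<bar>h q y - h p y - h' p y (q - p)\<bar> / norm (q - p)" for q y
  have lim0: "((\<lambda>q. \<integral>y. \<phi> q y \<partial>M) \<longlongrightarrow> (\<integral>y. 0 \<partial>M)) (at p)"
  proof (rule tendsto_integral_at[OF fin, where B = "2 * C"])
    have "\<forall>\<^sub>F q in at p. q \<in> ball p e"
      using e by (auto simp: eventually_at dist_commute intro!: exI[of _ e])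
    then show "\<forall>\<^sub>F q in at p. \<phi> q \<in> borel_measurable M \<and> (\<forall>y\<in>space M. \<bar>\<phi> q y\<bar> \<le> 2 * C)"
    proof eventually_elim
      case (elim q)
      have m: "\<phi> q \<in> borel_measurable M" unfolding \<phi>_def
        using meas[OF elim] meas[OF pb] meas'[of "q - p"] by measurable
      have "\<bar>\<phi> q y\<bar> \<le> 2 * C" if y: "y \<in> space M" for y
      proof (cases "q = p")
        case True then show ?thesis using C0 by (simp add: \<phi>_def)
      next
        case False
        have "\<bar>h q y - h p y - h' p y (q - p)\<bar> \<le> \<bar>h q y - h p y\<bar> + \<bar>h' p y (q - p)\<bar>" by simp
        also have "\<dots> \<le> 2 * C * norm (q - p)" using lip[OF elim y] bnd[OF pb y, of "q - p"] by simp
        finally show ?thesis using False by (simp add: \<phi>_def divide_le_eq)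
      qed
      with m show ?case by blast
    qed
  next
    fix y assume y: "y \<in> space M"
    have "((\<lambda>q. norm ((h q y - h p y) - h' p y (q - p)) / norm (q - p)) \<longlongrightarrow> 0) (at p)"
      using der[OF pb y] unfolding has_derivative_iff_norm by blast
    then show "((\<lambda>q. \<phi> q y) \<longlongrightarrow> 0) (at p)" by (simp add: \<phi>_def)
  qed simp
  show ?thesis unfolding has_derivative_iff_norm
  proof (intro conjI bl)
    show "((\<lambda>q. norm ((\<integral>y. h q y \<partial>M) - (\<integral>y. h p y \<partial>M) - (\<integral>y. h' p y (q - p) \<partial>M)) / norm (q - p)) \<longlongrightarrow> 0) (at p)"
    proof (rule tendsto_sandwich[where f = "\<lambda>_. 0" and h = "\<lambda>q. \<integral>y. \<phi> q y \<partial>M"])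
      show "\<forall>\<^sub>F q in at p. 0 \<le> norm ((\<integral>y. h q y \<partial>M) - (\<integral>y. h p y \<partial>M) - (\<integral>y. h' p y (q - p) \<partial>M)) / norm (q - p)"
        by simp
      have "\<forall>\<^sub>F q in at p. q \<in> ball p e"
        using e by (auto simp: eventually_at dist_commute intro!: exI[of _ e])
      then show "\<forall>\<^sub>F q in at p. norm ((\<integral>y. h q y \<partial>M) - (\<integral>y. h p y \<partial>M) - (\<integral>y. h' p y (q - p) \<partial>M)) / norm (q - p) \<le> (\<integral>y. \<phi> q y \<partial>M)"
      proof eventually_elim
        case (elim q)
        have "(\<integral>y. h q y \<partial>M) - (\<integral>y. h p y \<partial>M) - (\<integral>y. h' p y (q - p) \<partial>M) = (\<integral>y. h q y - h p y - h' p y (q - p) \<partial>M)"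
          using intq[OF elim] int inth' by simp
        then have "norm ((\<integral>y. h q y \<partial>M) - (\<integral>y. h p y \<partial>M) - (\<integral>y. h' p y (q - p) \<partial>M)) / norm (q - p)
            = norm (\<integral>y. h q y - h p y - h' p y (q - p) \<partial>M) / norm (q - p)" by simp
        also have "\<dots> \<le> (\<integral>y. norm (h q y - h p y - h' p y (q - p)) \<partial>M) / norm (q - p)"
          by (intro divide_right_mono Bochner_Integration.integral_norm_bound) simp
        also have "\<dots> = (\<integral>y. \<phi> q y \<partial>M)" unfolding \<phi>_def by simp
        finally show ?case .
      qed
      show "((\<lambda>_. 0) \<longlongrightarrow> 0) (at p)" by simp
      show "((\<lambda>q. \<integral>y. \<phi> q y \<partial>M) \<longlongrightarrow> 0) (at p)" using lim0 by simp
    qed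
  qed
qed

definition Upos :: "('a::euclidean_space \<times> real) set" where "Upos = UNIV \<times> {0<..}"

lemma open_Upos: "open Upos" unfolding Upos_def by (intro open_Times) auto

lemma Upos_iff: "p \<in> Upos \<longleftrightarrow> snd p > 0" unfolding Upos_def by (cases p) auto

fun PB :: "nat \<Rightarrow> ('a::euclidean_space \<times> real \<Rightarrow> 'a \<Rightarrow> real) \<Rightarrow> bool" where
  "PB 0 q = ((\<forall>y. continuous_on Upos (\<lambda>p. q p y)) \<and> (\<forall>p\<in>Upos. q p \<in> borel_measurable borel) \<and>
      (\<forall>p\<in>Upos. \<exists>C N. \<forall>\<^sub>F p' in nhds p. \<forall>y. \<bar>q p' y\<bar> \<le> C * (1 + norm (fst p' - y)) ^ N))"
| "PB (Suc n) q = (PB 0 q \<and> (\<exists>q'. (\<forall>p\<in>Upos. \<forall>y. ((\<lambda>p. q p y) has_derivative q' p y) (at p)) \<and>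
      (\<forall>v. PB n (\<lambda>p y. q' p y v))))"

lemma PB_mono: "PB (Suc n) q \<Longrightarrow> PB n q"
proof (induction n arbitrary: q)
  case 0 then show ?case by simp
next
  case (Suc n)
  then show ?case by (metis PB.simps(2))
qed

lemma PB_0: "PB n q \<Longrightarrow> PB 0 q"
  by (cases n) auto

lemma bound_add:
  fixes a b :: real
  assumes "\<bar>a\<bar> \<le> C1 * (1 + r) ^ N1" "\<bar>b\<bar> \<le> C2 * (1 + r) ^ N2" "0 \<le> (r::real)"
  shows "\<bar>a + b\<bar> \<le> (\<bar>C1\<bar> + \<bar>C2\<bar>) * (1 + r) ^ (N1 + N2)"
proof -
  have X1: "(1 + r) ^ N1 \<le> (1 + r) ^ (N1 + N2)" "(1 + r) ^ N2 \<le> (1 + r) ^ (N1 + N2)"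
    using assms(3) by (auto intro!: power_increasing)
  have "C1 * (1 + r) ^ N1 \<le> \<bar>C1\<bar> * (1 + r) ^ (N1 + N2)"
    using X1(1) assms(3) by (meson abs_ge_self dual_order.trans mult_mono abs_ge_zero zero_le_power le_add_same_cancel1 zero_le_one add_nonneg_nonneg)
  moreover have "C2 * (1 + r) ^ N2 \<le> \<bar>C2\<bar> * (1 + r) ^ (N1 + N2)"
    using X1(2) assms(3) by (meson abs_ge_self dual_order.trans mult_mono abs_ge_zero zero_le_power le_add_same_cancel1 zero_le_one add_nonneg_nonneg)
  moreover have "(\<bar>C1\<bar> + \<bar>C2\<bar>) * (1 + r) ^ (N1 + N2) = \<bar>C1\<bar> * (1 + r) ^ (N1 + N2) + \<bar>C2\<bar> * (1 + r) ^ (N1 + N2)"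
    by (simp add: distrib_right)
  moreover have "\<bar>a + b\<bar> \<le> \<bar>a\<bar> + \<bar>b\<bar>" by (rule abs_triangle_ineq)
  ultimately show ?thesis using assms(1,2) by linarith
qed

lemma bound_mult:
  fixes a b :: real
  assumes "\<bar>a\<bar> \<le> C1 * (1 + r) ^ N1" "\<bar>b\<bar> \<le> C2 * (1 + r) ^ N2"
  shows "\<bar>a * b\<bar> \<le> (C1 * C2) * (1 + r) ^ (N1 + N2)"
proof -
  have "\<bar>a * b\<bar> = \<bar>a\<bar> * \<bar>b\<bar>" by (simp add: abs_mult)
  also have "\<dots> \<le> (C1 * (1 + r) ^ N1) * (C2 * (1 + r) ^ N2)"
    by (rule mult_mono[OF assms]) (use assms in auto)
  also have "\<dots> = (C1 * C2) * (1 + r) ^ (N1 + N2)" by (simp add: power_add)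
  finally show ?thesis .
qed

lemma PB0_add: "PB 0 f \<Longrightarrow> PB 0 g \<Longrightarrow> PB 0 (\<lambda>p y. f p y + g p y)"
proof -
  assume f: "PB 0 f" and g: "PB 0 g"
  show ?thesis unfolding PB.simps
  proof (intro conjI allI ballI)
    fix y show "continuous_on Upos (\<lambda>p. f p y + g p y)" using f g by (auto intro: continuous_on_add)
  next
    fix p :: "'a \<times> real" assume "p \<in> Upos"
    then show "(\<lambda>y. f p y + g p y) \<in> borel_measurable borel" using f g by (auto intro!: borel_measurable_add)
  next
    fix p :: "'a \<times> real" assume p: "p \<in> Upos"
    obtain C1 N1 where 1: "\<forall>\<^sub>F p' in nhds p. \<forall>y. \<bar>f p' y\<bar> \<le> C1 * (1 + norm (fst p' - y)) ^ N1" using f p by auto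
    obtain C2 N2 where 2: "\<forall>\<^sub>F p' in nhds p. \<forall>y. \<bar>g p' y\<bar> \<le> C2 * (1 + norm (fst p' - y)) ^ N2" using g p by auto
    have "\<forall>\<^sub>F p' in nhds p. \<forall>y. \<bar>f p' y + g p' y\<bar> \<le> (\<bar>C1\<bar> + \<bar>C2\<bar>) * (1 + norm (fst p' - y)) ^ (N1 + N2)"
      using 1 2 by eventually_elim (auto intro: bound_add)
    then show "\<exists>C N. \<forall>\<^sub>F p' in nhds p. \<forall>y. \<bar>f p' y + g p' y\<bar> \<le> C * (1 + norm (fst p' - y)) ^ N" by blast
  qed
qed

lemma PB0_mult: "PB 0 f \<Longrightarrow> PB 0 g \<Longrightarrow> PB 0 (\<lambda>p y. f p y * g p y)"
proof -
  assume f: "PB 0 f" and g: "PB 0 g"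
  show ?thesis unfolding PB.simps
  proof (intro conjI allI ballI)
    fix y show "continuous_on Upos (\<lambda>p. f p y * g p y)" using f g by (auto intro: continuous_on_mult)
  next
    fix p :: "'a \<times> real" assume "p \<in> Upos"
    then show "(\<lambda>y. f p y * g p y) \<in> borel_measurable borel" using f g by (auto intro!: borel_measurable_times)
  next
    fix p :: "'a \<times> real" assume p: "p \<in> Upos"
    obtain C1 N1 where 1: "\<forall>\<^sub>F p' in nhds p. \<forall>y. \<bar>f p' y\<bar> \<le> C1 * (1 + norm (fst p' - y)) ^ N1" using f p by auto
    obtain C2 N2 where 2: "\<forall>\<^sub>F p' in nhds p. \<forall>y. \<bar>g p' y\<bar> \<le> C2 * (1 + norm (fst p' - y)) ^ N2" using g p by auto
    have "\<forall>\<^sub>F p' in nhds p. \<forall>y. \<bar>f p' y * g p' y\<bar> \<le> (C1 * C2) * (1 + norm (fst p' - y)) ^ (N1 + N2)"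
      using 1 2 by eventually_elim (auto intro: bound_mult)
    then show "\<exists>C N. \<forall>\<^sub>F p' in nhds p. \<forall>y. \<bar>f p' y * g p' y\<bar> \<le> C * (1 + norm (fst p' - y)) ^ N" by blast
  qed
qed

lemma PB_add: "PB n f \<Longrightarrow> PB n g \<Longrightarrow> PB n (\<lambda>p y. f p y + g p y)"
proof (induction n arbitrary: f g)
  case 0 then show ?case by (rule PB0_add)
next
  case (Suc n)
  from Suc.prems obtain f' g' where f: "\<forall>p\<in>Upos. \<forall>y. ((\<lambda>p. f p y) has_derivative f' p y) (at p)" "\<forall>v. PB n (\<lambda>p y. f' p y v)"
    and g: "\<forall>p\<in>Upos. \<forall>y. ((\<lambda>p. g p y) has_derivative g' p y) (at p)" "\<forall>v. PB n (\<lambda>p y. g' p y v)" by auto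
  show ?case unfolding PB.simps(2)
  proof (intro conjI exI[of _ "\<lambda>p y v. f' p y v + g' p y v"] allI ballI)
    show "PB 0 (\<lambda>p y. f p y + g p y)" using Suc.prems PB_0 PB0_add by blast
    fix v show "PB n (\<lambda>p y. f' p y v + g' p y v)" using f g Suc.IH by blast
  next
    fix p y assume "p \<in> (Upos :: ('a \<times> real) set)"
    then show "((\<lambda>p. f p y + g p y) has_derivative (\<lambda>v. f' p y v + g' p y v)) (at p)"
      using f g by (auto intro: has_derivative_add)
  qed
qed

lemma PB_mult: "PB n f \<Longrightarrow> PB n g \<Longrightarrow> PB n (\<lambda>p y. f p y * g p y)"
proof (induction n arbitrary: f g)
  case 0 then show ?case by (rule PB0_mult)
next
  case (Suc n)
  from Suc.prems obtain f' g' where f: "\<forall>p\<in>Upos. \<forall>y. ((\<lambda>p. f p y) has_derivative f' p y) (at p)" "\<forall>v. PB n (\<lambda>p y. f' p y v)"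
    and g: "\<forall>p\<in>Upos. \<forall>y. ((\<lambda>p. g p y) has_derivative g' p y) (at p)" "\<forall>v. PB n (\<lambda>p y. g' p y v)" by auto
  have fn: "PB n f" and gn: "PB n g" using Suc.prems PB_mono by blast+
  show ?case unfolding PB.simps(2)
  proof (intro conjI exI[of _ "\<lambda>p y v. f p y * g' p y v + f' p y v * g p y"] allI ballI)
    show "PB 0 (\<lambda>p y. f p y * g p y)" using Suc.prems PB_0 PB0_mult by blast
    fix v
    have "PB n (\<lambda>p y. g' p y v)" "PB n (\<lambda>p y. f' p y v)" using f g by blast+
    then show "PB n (\<lambda>p y. f p y * g' p y v + f' p y v * g p y)"
      using fn gn by (intro PB_add Suc.IH)
  next
    fix p y assume "p \<in> (Upos :: ('a \<times> real) set)"
    then show "((\<lambda>p. f p y * g p y) has_derivative (\<lambda>v. f p y * g' p y v + f' p y v * g p y)) (at p)"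
      using f g by (auto intro: has_derivative_mult)
  qed
qed

lemma PB_const: "PB n (\<lambda>p y. c)"
proof (induction n arbitrary: c)
  case 0
  show ?case unfolding PB.simps
    by (intro conjI allI ballI exI[of _ "\<bar>c\<bar>"] exI[of _ "0::nat"] always_eventually) auto
next
  case (Suc n)
  have "PB 0 (\<lambda>p y. c)" unfolding PB.simps by (intro conjI allI ballI exI[of _ "\<bar>c\<bar>"] exI[of _ "0::nat"] always_eventually) auto
  then show ?case unfolding PB.simps(2)
    by (intro conjI exI[of _ "\<lambda>p y v. 0"] ballI allI has_derivative_const Suc)
qed

lemma inner_bound: "\<bar>inner (x - y) u\<bar> \<le> norm u * (1 + norm (x - y)) ^ 1"
proof -
  have "\<bar>inner (x - y) u\<bar> \<le> norm (x - y) * norm u" by (rule Cauchy_Schwarz_ineq2)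
  also have "\<dots> \<le> norm u * (1 + norm (x - y))" by (simp add: algebra_simps)
  finally show ?thesis by simp
qed

lemma PB_inner: "PB n (\<lambda>p y. inner (fst p - y) u)"
proof -
  have P0: "PB 0 (\<lambda>p y. inner (fst p - y) u)" unfolding PB.simps
    by (intro conjI allI ballI exI[of _ "norm u"] exI[of _ 1] always_eventually inner_bound) (auto intro!: continuous_intros)
  show ?thesis
  proof (cases n)
    case 0 then show ?thesis using P0 by simp
  next
    case (Suc m)
    show ?thesis unfolding Suc PB.simps(2)
    proof (intro conjI allI ballI exI[of _ "\<lambda>p y v. inner (fst v) u"] P0 PB_const)
      fix p :: "'a \<times> real" and y
      show "((\<lambda>p. inner (fst p - y) u) has_derivative (\<lambda>v. inner (fst v) u)) (at p)"
        by (auto intro!: derivative_eq_intros)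
    qed
  qed
qed

lemma PB_normsq: "PB n (\<lambda>p y. (norm (fst p - y))\<^sup>2)"
proof -
  have b: "\<bar>(norm (x - y))\<^sup>2\<bar> \<le> 1 * (1 + norm (x - y)) ^ 2" for x y :: 'a
    by (simp add: power2_eq_square algebra_simps)
  have P0: "PB 0 (\<lambda>p y. (norm (fst p - y))\<^sup>2 :: real)" unfolding PB.simps
    by (intro conjI allI ballI exI[of _ "1::real"] exI[of _ "2::nat"] always_eventually b)
      (auto intro!: continuous_intros)
  show ?thesis
  proof (cases n)
    case 0 then show ?thesis using P0 by simp
  next
    case (Suc m)
    show ?thesis unfolding Suc PB.simps(2)
    proof (intro conjI allI ballI exI[of _ "\<lambda>p y v. 2 * inner (fst p - y) (fst v)"] P0 PB_mult PB_const PB_inner)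
      fix p :: "'a \<times> real" and y
      show "((\<lambda>p. (norm (fst p - y))\<^sup>2) has_derivative (\<lambda>v. 2 * inner (fst p - y) (fst v))) (at p)"
        unfolding power2_norm_eq_inner
        by (auto intro!: derivative_eq_intros simp: inner_commute)
    qed
  qed
qed

lemma PB_inv: "PB n (\<lambda>p y. inverse (snd p))"
proof (induction n)
  case 0
  show ?case unfolding PB.simps
  proof (intro conjI allI ballI)
    fix y show "continuous_on Upos (\<lambda>p::'a \<times> real. inverse (snd p))"
      by (intro continuous_on_inverse continuous_on_snd continuous_on_id) (auto simp: Upos_iff)
  next
    fix p :: "'a \<times> real" assume "p \<in> Upos"
    show "(\<lambda>y. inverse (snd p)) \<in> borel_measurable borel" by simp
  next
    fix p :: "'a \<times> real" assume p: "p \<in> Upos"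
    then have s: "snd p > 0" by (simp add: Upos_iff)
    have "((\<lambda>p'. snd p') \<longlongrightarrow> snd p) (nhds p)"
      by (intro tendsto_snd tendsto_ident_at[where s=UNIV, unfolded at_within_def] ) (auto intro: filterlim_ident)
    hence ev: "\<forall>\<^sub>F p' in nhds p. snd p / 2 < snd p'"
      by (rule order_tendstoD) (use s in simp)
    have "\<forall>\<^sub>F p' in nhds p. \<forall>y::'a. \<bar>inverse (snd p')\<bar> \<le> (2 / snd p) * (1 + norm (fst p' - y)) ^ 0"
      using ev
    proof eventually_elim
      case (elim p')
      then have "snd p' > 0" using s by simp
      with elim s show ?case by (simp add: field_simps)
    qed
    then show "\<exists>C N. \<forall>\<^sub>F p' in nhds p. \<forall>y. \<bar>inverse (snd p')\<bar> \<le> C * (1 + norm (fst p' - y)) ^ N" by blast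
  qed
next
  case (Suc n)
  have P0: "PB 0 (\<lambda>p y::'a. inverse (snd p))" using Suc PB_0 by blast
  show ?case unfolding PB.simps(2)
  proof (intro conjI allI ballI exI[of _ "\<lambda>p y v. (- snd v) * (inverse (snd p) * inverse (snd p))"] P0 PB_mult PB_const Suc)
    fix p :: "'a \<times> real" and y :: 'a assume "p \<in> Upos"
    then have s: "snd p \<noteq> 0" by (simp add: Upos_iff)
    show "((\<lambda>p. inverse (snd p)) has_derivative (\<lambda>v. (- snd v) * (inverse (snd p) * inverse (snd p)))) (at p)"
      using s by (auto intro!: derivative_eq_intros simp: field_simps)
  qed
qed

definition K :: "'a::euclidean_space \<times> real \<Rightarrow> 'a \<Rightarrow> real" where
  "K p y = exp (- (norm (fst p - y))\<^sup>2 / (2 * (snd p)\<^sup>2))"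

definition L :: "'a::euclidean_space \<times> real \<Rightarrow> 'a \<Rightarrow> 'a \<times> real \<Rightarrow> real" where
  "L p y v = (-1) * (inner (fst p - y) (fst v) * (inverse (snd p) * inverse (snd p))) +
     snd v * ((norm (fst p - y))\<^sup>2 * (inverse (snd p) * (inverse (snd p) * inverse (snd p))))"

lemma PB_L: "PB n (\<lambda>p y. L p y v)"
  unfolding L_def by (intro PB_add PB_mult PB_const PB_inner PB_normsq PB_inv)

lemma K_deriv:
  assumes "p \<in> Upos"
  shows "((\<lambda>p. K p y) has_derivative (\<lambda>v. K p y * L p y v)) (at p)"
proof -
  from assms have s: "snd p \<noteq> 0" by (simp add: Upos_iff)
  show ?thesis unfolding K_def L_def power2_norm_eq_inner
    using s by (auto intro!: derivative_eq_intros simp: field_simps inner_commute power2_eq_square)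
qed

lemma qK_deriv:
  assumes "((\<lambda>p. q p y) has_derivative q' p y) (at p)" "p \<in> Upos"
  shows "((\<lambda>p. q p y * K p y) has_derivative (\<lambda>v. (q' p y v + q p y * L p y v) * K p y)) (at p)"
  by (rule has_derivative_eq_rhs[OF has_derivative_mult[OF assms(1) K_deriv[OF assms(2)]]])
    (auto simp: algebra_simps)

lemma gauss_poly_bound:
  fixes r c :: real
  assumes "c > 0" "r \<ge> 0"
  shows "(1 + r) ^ N * exp (- c * r\<^sup>2) \<le> exp ((real N)\<^sup>2 / (4 * c))"
proof -
  have "(1 + r) ^ N \<le> exp r ^ N" using assms by (intro power_mono) auto
  also have "\<dots> = exp (real N * r)" by (simp add: exp_of_nat_mult)
  finally have 1: "(1 + r) ^ N * exp (- c * r\<^sup>2) \<le> exp (real N * r) * exp (- c * r\<^sup>2)"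
    by (intro mult_right_mono) auto
  have "real N * r - c * r\<^sup>2 \<le> (real N)\<^sup>2 / (4 * c)"
  proof -
    have "0 \<le> c * (r - real N / (2 * c))\<^sup>2" using assms by simp
    also have "c * (r - real N / (2 * c))\<^sup>2 = c * r\<^sup>2 - real N * r + (real N)\<^sup>2 / (4 * c)"
      using assms by (simp add: power2_eq_square field_simps)
    finally show ?thesis by simp
  qed
  then have "exp (real N * r) * exp (- c * r\<^sup>2) \<le> exp ((real N)\<^sup>2 / (4 * c))"
    by (simp add: exp_add[symmetric])
  with 1 show ?thesis by linarith
qed

lemma nhds_snd_ev:
  fixes p :: "'a::euclidean_space \<times> real"
  assumes "snd p > 0"
  shows "\<forall>\<^sub>F p' in nhds p. snd p / 2 < snd p' \<and> snd p' < 2 * snd p"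
proof -
  have t: "((\<lambda>p'. snd p') \<longlongrightarrow> snd p) (nhds p)"
    by (intro tendsto_snd) (auto intro: filterlim_ident)
  have 1: "\<forall>\<^sub>F p' in nhds p. snd p / 2 < snd p'"
    by (rule order_tendstoD(1)[OF t]) (use assms in simp)
  have 2: "\<forall>\<^sub>F p' in nhds p. snd p' < 2 * snd p"
    by (rule order_tendstoD(2)[OF t]) (use assms in simp)
  show ?thesis using 1 2 by (rule eventually_conj)
qed

lemma PBK0:
  assumes "PB 0 q" "p \<in> Upos"
  shows "\<exists>B. \<forall>\<^sub>F p' in nhds p. \<forall>y. \<bar>q p' y * K p' y\<bar> \<le> B"
proof -
  from assms obtain C N where CN: "\<forall>\<^sub>F p' in nhds p. \<forall>y. \<bar>q p' y\<bar> \<le> C * (1 + norm (fst p' - y)) ^ N"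
    by auto
  from assms have s: "snd p > 0" by (simp add: Upos_iff)
  define c where "c = 1 / (8 * (snd p)\<^sup>2)"
  have c: "c > 0" using s by (simp add: c_def)
  have "\<forall>\<^sub>F p' in nhds p. \<forall>y. \<bar>q p' y * K p' y\<bar> \<le> \<bar>C\<bar> * exp ((real N)\<^sup>2 / (4 * c))"
    using CN nhds_snd_ev[OF s]
  proof eventually_elim
    case (elim p')
    show ?case
    proof
      fix y
      define r where "r = norm (fst p' - y)"
      have r: "r \<ge> 0" by (simp add: r_def)
      have sp: "0 < snd p'" "snd p' < 2 * snd p" using elim s by auto
      have "(snd p')\<^sup>2 \<le> (2 * snd p)\<^sup>2" using sp by (intro power_mono) auto
      then have "r\<^sup>2 / (2 * (2 * snd p)\<^sup>2) \<le> r\<^sup>2 / (2 * (snd p')\<^sup>2)"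
        using sp by (intro divide_left_mono mult_pos_pos) auto
      then have Kb: "K p' y \<le> exp (- c * r\<^sup>2)"
        unfolding K_def r_def[symmetric] c_def by (simp add: power2_eq_square field_simps)
      have K0: "0 \<le> K p' y" by (simp add: K_def)
      have "\<bar>q p' y * K p' y\<bar> = \<bar>q p' y\<bar> * K p' y" using K0 by (simp add: abs_mult)
      also have "\<dots> \<le> (C * (1 + r) ^ N) * exp (- c * r\<^sup>2)"
      proof (rule mult_mono)
        show "\<bar>q p' y\<bar> \<le> C * (1 + r) ^ N" using elim unfolding r_def by blast
        then show "0 \<le> C * (1 + r) ^ N" by (meson abs_ge_zero order_trans)
      qed (use Kb K0 in auto)
      also have "\<dots> \<le> \<bar>C\<bar> * ((1 + r) ^ N * exp (- c * r\<^sup>2))"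
        unfolding mult.assoc by (intro mult_right_mono) (auto simp: r)
      also have "\<dots> \<le> \<bar>C\<bar> * exp ((real N)\<^sup>2 / (4 * c))"
        by (intro mult_left_mono gauss_poly_bound c r) auto
      finally show "\<bar>q p' y * K p' y\<bar> \<le> \<bar>C\<bar> * exp ((real N)\<^sup>2 / (4 * c))" .
    qed
  qed
  then show ?thesis by blast
qed

lemma nhds_to_at: "eventually P (nhds a) \<Longrightarrow> eventually P (at a within s)"
  by (auto simp: eventually_at_filter elim: eventually_mono)

lemma K_meas: "K p \<in> borel_measurable borel"
  unfolding K_def by (auto intro!: borel_measurable_continuous_onI continuous_intros)

lemma lin_expand:
  fixes f :: "'b::euclidean_space \<Rightarrow> real"
  assumes "linear f"
  shows "f v = (\<Sum>b\<in>Basis. (v \<bullet> b) * f b)"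
proof -
  have "f v = f (\<Sum>b\<in>Basis. (v \<bullet> b) *\<^sub>R b)" by (simp add: euclidean_representation)
  also have "\<dots> = (\<Sum>b\<in>Basis. (v \<bullet> b) * f b)"
    using assms by (simp add: linear_sum linear_scale)
  finally show ?thesis .
qed

locale gauss_int =
  fixes M :: "'a::euclidean_space measure"
  assumes fin: "finite_measure M" and setsM: "sets M = sets borel"
begin

lemma measM: "f \<in> borel_measurable borel \<Longrightarrow> f \<in> borel_measurable M"
  using measurable_cong_sets[OF setsM refl] by blast

lemma hK_meas: "PB 0 q \<Longrightarrow> p \<in> Upos \<Longrightarrow> (\<lambda>y. q p y * K p y) \<in> borel_measurable M"
  by (intro measM borel_measurable_times K_meas) auto

lemma hK_int:
  assumes "PB 0 q" "p \<in> Upos"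
  shows "integrable M (\<lambda>y. q p y * K p y)"
proof -
  interpret finite_measure M by (rule fin)
  obtain B where "\<forall>\<^sub>F p' in nhds p. \<forall>y. \<bar>q p' y * K p' y\<bar> \<le> B" using PBK0[OF assms] by blast
  then have "\<forall>y. \<bar>q p y * K p y\<bar> \<le> B" by (rule eventually_nhds_x_imp_x)
  then show ?thesis
    by (intro integrable_const_bound[where B = B] hK_meas assms) auto
qed

lemma INT_deriv:
  assumes q0: "PB 0 q" and q'0: "\<And>v. PB 0 (\<lambda>p y. q' p y v)"
    and q'd: "\<forall>p\<in>Upos. \<forall>y. ((\<lambda>p. q p y) has_derivative q' p y) (at p)"
    and p: "p \<in> Upos"
  shows "((\<lambda>p. \<integral>y. q p y * K p y \<partial>M) has_derivative (\<lambda>v. \<integral>y. (q' p y v + q p y * L p y v) * K p y \<partial>M)) (at p)"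
proof -
  define qq where "qq v p y = q' p y v + q p y * L p y v" for v p y
  have PBqq: "PB 0 (qq v)" for v
    unfolding qq_def by (intro PB0_add PB0_mult q'0 q0 PB_0[OF PB_L])
  have qn: "PB 0 q" by (rule q0)
  note q' = q'd
  have der: "((\<lambda>p. \<integral>y. q p y * K p y \<partial>M) has_derivative (\<lambda>v. \<integral>y. qq v p y * K p y \<partial>M)) (at p)"
  proof -
    have "\<forall>b\<in>Basis. \<exists>B. \<forall>\<^sub>F p' in nhds p. \<forall>y. \<bar>qq b p' y * K p' y\<bar> \<le> B"
      using PBK0[OF PBqq p] by blast
    from bchoice[OF this] obtain Bf where Bf: "\<forall>b\<in>Basis. \<forall>\<^sub>F p' in nhds p. \<forall>y. \<bar>qq b p' y * K p' y\<bar> \<le> Bf b"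
      by blast
    have "\<forall>\<^sub>F p' in nhds p. \<forall>b\<in>Basis. \<forall>y. \<bar>qq b p' y * K p' y\<bar> \<le> Bf b"
      using Bf by (intro eventually_ball_finite) auto
    moreover have "\<forall>\<^sub>F p' in nhds p. p' \<in> Upos" by (rule eventually_nhds_in_open[OF open_Upos p])
    ultimately have "\<forall>\<^sub>F p' in nhds p. p' \<in> Upos \<and> (\<forall>b\<in>Basis. \<forall>y. \<bar>qq b p' y * K p' y\<bar> \<le> Bf b)"
      by (rule eventually_conj[rotated])
    then obtain e where e: "e > 0" and eP: "\<And>p'. dist p' p < e \<Longrightarrow> p' \<in> Upos \<and> (\<forall>b\<in>Basis. \<forall>y. \<bar>qq b p' y * K p' y\<bar> \<le> Bf b)"
      unfolding eventually_nhds_metric by blast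
    have inball: "p' \<in> Upos \<and> (\<forall>b\<in>Basis. \<forall>y. \<bar>qq b p' y * K p' y\<bar> \<le> Bf b)" if "p' \<in> ball p e" for p'
      using eP that by (simp add: dist_commute)
    have hd: "((\<lambda>p. q p y * K p y) has_derivative (\<lambda>v. qq v p' y * K p' y)) (at p')" if "p' \<in> Upos" for p' y
      unfolding qq_def by (rule qK_deriv) (use q' that in auto)
    show ?thesis
    proof (rule deriv_integral[OF fin e, where C = "\<Sum>b\<in>Basis. \<bar>Bf b\<bar>"])
      show "0 \<le> (\<Sum>b\<in>Basis. \<bar>Bf b\<bar>)" by (simp add: sum_nonneg)
      show "((\<lambda>p. q p y * K p y) has_derivative (\<lambda>v. qq v p' y * K p' y)) (at p')"
        if "p' \<in> ball p e" "y \<in> space M" for p' y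
        using hd inball that by blast
      show "\<bar>qq v p' y * K p' y\<bar> \<le> (\<Sum>b\<in>Basis. \<bar>Bf b\<bar>) * norm v"
        if p': "p' \<in> ball p e" and "y \<in> space M" for p' y v
      proof -
        have lin: "linear (\<lambda>v. qq v p' y * K p' y)"
          using hd[of p' y] inball[OF p'] has_derivative_linear by blast
        have "\<bar>qq v p' y * K p' y\<bar> = \<bar>\<Sum>b\<in>Basis. (v \<bullet> b) * (qq b p' y * K p' y)\<bar>"
          using lin_expand[OF lin, of v] by simp
        also have "\<dots> \<le> (\<Sum>b\<in>Basis. \<bar>(v \<bullet> b) * (qq b p' y * K p' y)\<bar>)"
          by (rule sum_abs)
        also have "\<dots> \<le> (\<Sum>b\<in>Basis. norm v * \<bar>Bf b\<bar>)"
        proof (rule sum_mono)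
          fix b :: "'a \<times> real" assume b: "b \<in> Basis"
          have "\<bar>(v \<bullet> b) * (qq b p' y * K p' y)\<bar> = \<bar>v \<bullet> b\<bar> * \<bar>qq b p' y * K p' y\<bar>" by (simp add: abs_mult)
          also have "\<dots> \<le> norm v * \<bar>Bf b\<bar>"
          proof (rule mult_mono)
            have "\<bar>qq b p' y * K p' y\<bar> \<le> Bf b" using inball[OF p'] b by blast
            then show "\<bar>qq b p' y * K p' y\<bar> \<le> \<bar>Bf b\<bar>" by linarith
          qed (use Basis_le_norm[OF b] in auto)
          finally show "\<bar>(v \<bullet> b) * (qq b p' y * K p' y)\<bar> \<le> norm v * \<bar>Bf b\<bar>" .
        qed
        also have "\<dots> = (\<Sum>b\<in>Basis. \<bar>Bf b\<bar>) * norm v" by (simp add: sum_distrib_left mult.commute)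
        finally show ?thesis .
      qed
      show "(\<lambda>y. q p' y * K p' y) \<in> borel_measurable M" if "p' \<in> ball p e" for p'
        using hK_meas[OF qn] inball that by blast
      show "(\<lambda>y. qq v p y * K p y) \<in> borel_measurable M" for v
        using hK_meas[OF PBqq p] .
      show "integrable M (\<lambda>y. q p y * K p y)" using hK_int[OF qn p] .
    qed
  qed
  then show ?thesis unfolding qq_def .
qed

lemma INT_Ck: "PB n q \<Longrightarrow> Ck_on n Upos (\<lambda>p. \<integral>y. q p y * K p y \<partial>M)"
proof (induction n arbitrary: q)
  case 0
  have "isCont (\<lambda>p. \<integral>y. q p y * K p y \<partial>M) p" if p: "p \<in> Upos" for p
  proof -
    obtain B where B: "\<forall>\<^sub>F p' in nhds p. \<forall>y. \<bar>q p' y * K p' y\<bar> \<le> B" using PBK0[OF 0 p] by blast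
    show ?thesis unfolding isCont_def
  proof (rule tendsto_integral_at[OF fin, where B = B])
    have "\<forall>\<^sub>F p' in nhds p. p' \<in> Upos" by (rule eventually_nhds_in_open[OF open_Upos p])
    with B have "\<forall>\<^sub>F p' in nhds p. (\<lambda>y. q p' y * K p' y) \<in> borel_measurable M \<and> (\<forall>y\<in>space M. \<bar>q p' y * K p' y\<bar> \<le> B)"
    proof eventually_elim
      case (elim p')
      then show ?case using hK_meas[OF 0, of p'] by blast
    qed
    then show "\<forall>\<^sub>F p' in at p. (\<lambda>y. q p' y * K p' y) \<in> borel_measurable M \<and> (\<forall>y\<in>space M. \<bar>q p' y * K p' y\<bar> \<le> B)"
      by (rule nhds_to_at)
  next
    fix y
    have c1: "isCont (\<lambda>p. q p y) p"
      using 0 p open_Upos continuous_on_eq_continuous_at by auto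
    have c2: "isCont (\<lambda>p. K p y) p"
      using K_deriv[OF p] has_derivative_continuous by blast
    show "((\<lambda>p'. q p' y * K p' y) \<longlongrightarrow> q p y * K p y) (at p)"
      using isCont_mult[OF c1 c2] unfolding isCont_def .
  next
    show "(\<lambda>y. q p y * K p y) \<in> borel_measurable M" using hK_meas 0 p by auto
  qed
  qed
  then show ?case by (auto intro: continuous_at_imp_continuous_on)
next
  case (Suc n)
  from Suc.prems obtain q' where q': "\<forall>p\<in>Upos. \<forall>y. ((\<lambda>p. q p y) has_derivative q' p y) (at p)"
    "\<forall>v. PB n (\<lambda>p y. q' p y v)" by auto
  have qn: "PB n q" using Suc.prems PB_mono by blast
  define qq where "qq v p y = q' p y v + q p y * L p y v" for v p y
  have PBqq: "PB n (qq v)" for v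
    unfolding qq_def by (intro PB_add PB_mult q'(2)[rule_format] qn PB_L)
  have der: "((\<lambda>p. \<integral>y. q p y * K p y \<partial>M) has_derivative (\<lambda>v. \<integral>y. qq v p y * K p y \<partial>M)) (at p)"
    if p: "p \<in> Upos" for p
    unfolding qq_def by (rule INT_deriv[OF PB_0[OF qn] PB_0 q'(1) p]) (use q'(2) in blast)
  show ?case unfolding Ck_on.simps
  proof (intro exI[of _ "\<lambda>p v. \<integral>y. qq v p y * K p y \<partial>M"] conjI ballI allI)
    fix p :: "'a \<times> real" assume "p \<in> Upos" then show "((\<lambda>p. \<integral>y. q p y * K p y \<partial>M) has_derivative (\<lambda>v. \<integral>y. qq v p y * K p y \<partial>M)) (at p)"
      by (rule der)
  next
    fix v show "Ck_on n Upos (\<lambda>p. \<integral>y. qq v p y * K p y \<partial>M)" by (rule Suc.IH[OF PBqq])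
  qed
qed

end

lemma partial_sigma:
  fixes F :: "'a::real_normed_vector \<times> real \<Rightarrow> real"
  assumes "(F has_derivative F') (at (x, s))"
  shows "((\<lambda>t. F (x, t)) has_real_derivative F' (0, 1)) (at s)"
proof -
  have p: "((\<lambda>t. (x, t)) has_derivative (\<lambda>t. (0, t))) (at s)"
    by (intro has_derivative_Pair has_derivative_const has_derivative_ident)
  have "((F \<circ> (\<lambda>t. (x, t))) has_derivative (F' \<circ> (\<lambda>t. (0, t)))) (at s)"
    by (rule diff_chain_at[OF p assms])
  moreover have "(F' \<circ> (\<lambda>t. (0, t))) = (\<lambda>t. F' (0, 1) * t)"
  proof
    fix t
    interpret bounded_linear F' using assms has_derivative_bounded_linear by blast
    have "F' (0, t) = F' (t *\<^sub>R (0, 1))" by simp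
    also have "\<dots> = t * F' (0, 1)" by (simp only: scale) simp
    finally show "(F' \<circ> (\<lambda>t. (0, t))) t = F' (0, 1) * t" by simp
  qed
  ultimately have "((\<lambda>t. F (x, t)) has_derivative (\<lambda>t. F' (0, 1) * t)) (at s)" unfolding o_def by metis
  then show ?thesis unfolding has_field_derivative_def by assumption
qed

definition qB :: "'a::euclidean_space \<times> real \<Rightarrow> 'a \<Rightarrow> real" where
  "qB p y = (1/2) * ((norm (fst p - y))\<^sup>2 * (inverse (snd p) * inverse (snd p)))"

definition qB' :: "'a::euclidean_space \<times> real \<Rightarrow> 'a \<Rightarrow> 'a \<times> real \<Rightarrow> real" where
  "qB' p y v = inner (fst p - y) (fst v) * (inverse (snd p) * inverse (snd p)) +
     (- snd v) * ((norm (fst p - y))\<^sup>2 * (inverse (snd p) * (inverse (snd p) * inverse (snd p))))"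

lemma PB_qB: "PB n qB"
  unfolding qB_def[abs_def] by (intro PB_add PB_mult PB_const PB_inner PB_normsq PB_inv)

lemma PB_qB': "PB n (\<lambda>p y. qB' p y v)"
  unfolding qB'_def by (intro PB_add PB_mult PB_const PB_inner PB_normsq PB_inv)

lemma qB_deriv:
  assumes "p \<in> Upos"
  shows "((\<lambda>p. qB p y) has_derivative qB' p y) (at p)"
proof -
  from assms have s: "snd p \<noteq> 0" by (simp add: Upos_iff)
  show ?thesis unfolding qB_def qB'_def[abs_def] power2_norm_eq_inner
    using s by (auto intro!: derivative_eq_intros simp: field_simps inner_commute power2_eq_square)
qed

locale gauss_prob = gauss_int M + prob_space M for M :: "'a::euclidean_space measure" +
  assumes sph: "\<And>c r. sphere c r \<in> null_sets M"
begin

definition Z :: "'a \<times> real \<Rightarrow> real" where "Z p = (\<integral>y. 1 * K p y \<partial>M)"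
definition B :: "'a \<times> real \<Rightarrow> real" where "B p = (\<integral>y. qB p y * K p y \<partial>M)"

lemma K_pos: "K p y > 0" by (simp add: K_def)

lemma Z_pos:
  assumes "p \<in> Upos" shows "Z p > 0"
proof -
  have int: "integrable M (\<lambda>y. 1 * K p y)" by (rule hK_int[OF PB_const assms])
  have ge: "Z p \<ge> 0" unfolding Z_def by (intro integral_nonneg_AE) (auto simp: K_pos less_imp_le)
  have "Z p \<noteq> 0"
  proof
    assume "Z p = 0"
    then have "AE y in M. 1 * K p y = 0"
      using integral_nonneg_eq_0_iff_AE[OF int] unfolding Z_def by (auto simp: K_pos less_imp_le)
    then have "AE y in M. False" by eventually_elim (metis K_pos less_irrefl mult_1)
    then show False by simp
  qed
  with ge show ?thesis by simp
qed

lemma Z_Ck: "Ck_on n Upos Z"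
  unfolding Z_def[abs_def] by (rule INT_Ck[OF PB_const])

lemma B_Ck: "Ck_on n Upos B"
  unfolding B_def[abs_def] by (rule INT_Ck[OF PB_qB])

lemma F_eq:
  assumes s: "\<sigma> > 0"
  shows "F_fun \<rho> M x \<sigma> = - B (x, \<sigma>) / Z (x, \<sigma>) - ln (Z (x, \<sigma>)) + ln \<rho>"
proof -
  define p where "p = (x, \<sigma>)"
  have p: "p \<in> Upos" using s by (simp add: p_def Upos_iff)
  have Zp: "Z p > 0" by (rule Z_pos[OF p])
  have Zd: "(\<integral>z. exp (- (norm (x - z))\<^sup>2 / (2 * \<sigma>\<^sup>2)) \<partial>M) = Z p"
    unfolding Z_def K_def p_def by simp
  have w: "gauss_w M x \<sigma> y = K p y / Z p" for y
    unfolding gauss_w_def Zd by (simp add: K_def p_def)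
  have lnw: "ln (gauss_w M x \<sigma> y) = - qB p y - ln (Z p)" for y
  proof -
    have "ln (gauss_w M x \<sigma> y) = ln (K p y) - ln (Z p)" unfolding w using Zp K_pos[of p y] by (simp add: ln_div)
    also have "ln (K p y) = - qB p y" unfolding K_def qB_def p_def using s
      by (simp add: field_simps power2_eq_square)
    finally show ?thesis .
  qed
  have i1: "integrable M (\<lambda>y. qB p y * K p y)" by (rule hK_int[OF PB_qB p])
  have i2: "integrable M (\<lambda>y. 1 * K p y)" by (rule hK_int[OF PB_const p])
  have "(\<integral>y. gauss_w M x \<sigma> y * ln (gauss_w M x \<sigma> y) \<partial>M)
      = (\<integral>y. (- inverse (Z p)) * (qB p y * K p y) - (ln (Z p) * inverse (Z p)) * (1 * K p y) \<partial>M)"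
    by (rule Bochner_Integration.integral_cong) (simp_all only: lnw, simp_all add: w divide_inverse algebra_simps)
  also have "\<dots> = (- inverse (Z p)) * B p - (ln (Z p) * inverse (Z p)) * Z p"
    using i1 i2 by (simp add: B_def Z_def)
  also have "\<dots> = - B p / Z p - ln (Z p)" using Zp by (simp add: field_simps)
  finally show ?thesis unfolding F_fun_def p_def by simp
qed

definition G :: "real \<Rightarrow> 'a \<times> real \<Rightarrow> real" where "G \<rho> p = F_fun \<rho> M (fst p) (snd p)"

lemma G_Ck: "Ck_on n Upos (G \<rho>)"
proof (rule Ck_cong[OF open_Upos])
  show "Ck_on n Upos (\<lambda>p. - (B p * inverse (Z p)) + - ln (Z p) + ln \<rho>)"
    by (intro Ck_add Ck_neg Ck_mult Ck_inverse Ck_ln Ck_const Z_Ck B_Ck)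
       (auto simp: Z_pos less_imp_neq[symmetric])
  show "- (B p * inverse (Z p)) + - ln (Z p) + ln \<rho> = G \<rho> p" if "p \<in> Upos" for p
    using that F_eq[of "snd p" \<rho> "fst p"] by (simp add: G_def Upos_iff divide_inverse)
qed

end

lemma alg_sign:
  fixes z I a c :: real
  assumes "z > 0" "I > 0"
  shows "- (((- (I^3 * a) + (1/2 * I^5) * c) * z - ((1/2 * I^2) * a) * (I^3 * a)) / (z * z)) - (1 / z) * (I^3 * a)
       = - (I^5 / 2) * (c * z - a^2) / z^2"
  using assms by (simp add: field_simps power2_eq_square power3_eq_cube) (simp add: algebra_simps power_def)

context gauss_prob
begin

lemma Z_deriv: "p \<in> Upos \<Longrightarrow> (Z has_derivative (\<lambda>v. \<integral>y. (0 + 1 * L p y v) * K p y \<partial>M)) (at p)"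
  unfolding Z_def[abs_def] by (rule INT_deriv[OF PB_const PB_const]) auto

lemma B_deriv: "p \<in> Upos \<Longrightarrow> (B has_derivative (\<lambda>v. \<integral>y. (qB' p y v + qB p y * L p y v) * K p y \<partial>M)) (at p)"
  unfolding B_def[abs_def] by (rule INT_deriv[OF PB_0[OF PB_qB] PB_0[OF PB_qB']]) (auto intro: qB_deriv)

lemma var_pos:
  fixes x :: 'a
  assumes s: "\<sigma> > 0"
  defines "a \<equiv> \<integral>y. (norm (x - y))\<^sup>2 * K (x, \<sigma>) y \<partial>M"
    and "c \<equiv> \<integral>y. ((norm (x - y))\<^sup>2 * (norm (x - y))\<^sup>2) * K (x, \<sigma>) y \<partial>M"
  shows "c * Z (x, \<sigma>) - a\<^sup>2 > 0"
proof -
  define p where "p = (x, \<sigma>)"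
  have p: "p \<in> Upos" using s by (simp add: p_def Upos_iff)
  define z where "z = Z p"
  have z: "z > 0" unfolding z_def by (rule Z_pos[OF p])
  define m where "m = a / z"
  define g where "g y = (norm (x - y))\<^sup>2" for y
  have ia: "integrable M (\<lambda>y. g y * K p y)"
    using hK_int[OF PB_0[OF PB_normsq] p] by (simp add: g_def p_def)
  have ic: "integrable M (\<lambda>y. (g y * g y) * K p y)"
    using hK_int[OF PB_0[OF PB_mult[OF PB_normsq PB_normsq]] p] by (simp add: g_def p_def)
  have iz: "integrable M (\<lambda>y. 1 * K p y)" by (rule hK_int[OF PB_const p])
  have aa: "a = (\<integral>y. g y * K p y \<partial>M)" unfolding a_def g_def p_def ..
  have cc: "c = (\<integral>y. (g y * g y) * K p y \<partial>M)" unfolding c_def g_def p_def ..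
  have zz: "z = (\<integral>y. 1 * K p y \<partial>M)" unfolding z_def Z_def ..
  have eq: "(\<integral>y. (g y - m)\<^sup>2 * K p y \<partial>M) = c - 2 * m * a + m\<^sup>2 * z"
  proof -
    have "(\<integral>y. (g y - m)\<^sup>2 * K p y \<partial>M) = (\<integral>y. (g y * g y) * K p y - (2 * m) * (g y * K p y) + m\<^sup>2 * (1 * K p y) \<partial>M)"
      by (rule Bochner_Integration.integral_cong) (simp_all add: power2_eq_square algebra_simps)
    also have "\<dots> = c - 2 * m * a + m\<^sup>2 * z"
      using ia ic iz by (simp add: aa cc zz)
    finally show ?thesis .
  qed
  have pos: "(\<integral>y. (g y - m)\<^sup>2 * K p y \<partial>M) > 0"
  proof -
    have int: "integrable M (\<lambda>y. (g y - m)\<^sup>2 * K p y)"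
    proof -
      have "integrable M (\<lambda>y. (g y * g y) * K p y - (2 * m) * (g y * K p y) + m\<^sup>2 * (1 * K p y))"
        using ia ic iz by simp
      moreover have "(\<lambda>y. (g y - m)\<^sup>2 * K p y) = (\<lambda>y. (g y * g y) * K p y - (2 * m) * (g y * K p y) + m\<^sup>2 * (1 * K p y))"
        by (rule ext) (simp add: power2_eq_square algebra_simps)
      ultimately show ?thesis by simp
    qed
    have ge: "(\<integral>y. (g y - m)\<^sup>2 * K p y \<partial>M) \<ge> 0"
      by (intro integral_nonneg_AE AE_I2) (simp add: K_pos less_imp_le)
    have "(\<integral>y. (g y - m)\<^sup>2 * K p y \<partial>M) \<noteq> 0"
    proof
      assume "(\<integral>y. (g y - m)\<^sup>2 * K p y \<partial>M) = 0"
      then have "AE y in M. (g y - m)\<^sup>2 * K p y = 0"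
        using integral_nonneg_eq_0_iff_AE[OF int] by (simp add: K_pos less_imp_le)
      moreover have "AE y in M. y \<notin> sphere x (sqrt m)" by (rule AE_not_in[OF sph])
      ultimately have "AE y in M. False"
      proof eventually_elim
        case (elim y)
        then have "g y = m" using K_pos[of p y] by simp
        then have "norm (x - y) = sqrt m" unfolding g_def by (metis norm_ge_zero real_sqrt_abs abs_of_nonneg)
        then have "y \<in> sphere x (sqrt m)" by (simp add: dist_norm)
        with elim show False by simp
      qed
      then show False by simp
    qed
    with ge show ?thesis by simp
  qed
  have "c - 2 * m * a + m\<^sup>2 * z = (c * z - a\<^sup>2) / z"
    using z unfolding m_def by (simp add: field_simps power2_eq_square)
  with eq pos z have "(c * z - a\<^sup>2) / z > 0" by simp
  with z have "c * z - a\<^sup>2 > 0" by (simp add: zero_less_divide_iff)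
  then show ?thesis unfolding z_def p_def .
qed

end

context gauss_prob
begin

lemma G_sigma_deriv:
  fixes x :: 'a
  assumes s: "\<sigma> > 0"
  shows "\<exists>d. ((\<lambda>t. G \<rho> (x, t)) has_real_derivative d) (at \<sigma>) \<and> d < 0"
proof -
  define p where "p = (x, \<sigma>)"
  have p: "p \<in> Upos" using s by (simp add: p_def Upos_iff)
  define I where "I = inverse \<sigma>"
  have I: "I > 0" using s by (simp add: I_def)
  define g where "g y = (norm (x - y))\<^sup>2" for y
  define a where "a = (\<integral>y. g y * K p y \<partial>M)"
  define c where "c = (\<integral>y. (g y * g y) * K p y \<partial>M)"
  define z where "z = Z p"
  have z: "z > 0" unfolding z_def by (rule Z_pos[OF p])
  have ia: "integrable M (\<lambda>y. g y * K p y)"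
    using hK_int[OF PB_0[OF PB_normsq] p] by (simp add: g_def p_def)
  have ic: "integrable M (\<lambda>y. (g y * g y) * K p y)"
    using hK_int[OF PB_0[OF PB_mult[OF PB_normsq PB_normsq]] p] by (simp add: g_def p_def)
  define dZ where "dZ = (\<integral>y. (0 + 1 * L p y (0, 1)) * K p y \<partial>M)"
  define dB where "dB = (\<integral>y. (qB' p y (0, 1) + qB p y * L p y (0, 1)) * K p y \<partial>M)"
  have hZ: "((\<lambda>t. Z (x, t)) has_real_derivative dZ) (at \<sigma>)"
    unfolding dZ_def using partial_sigma[OF Z_deriv[OF p, unfolded p_def]] by (simp add: p_def)
  have hB: "((\<lambda>t. B (x, t)) has_real_derivative dB) (at \<sigma>)"
    unfolding dB_def using partial_sigma[OF B_deriv[OF p, unfolded p_def]] by (simp add: p_def)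
  have LI: "L p y (0, 1) = I^3 * g y" for y
    by (simp add: L_def p_def I_def g_def power3_eq_cube)
  have dZv: "dZ = I^3 * a"
  proof -
    have "dZ = (\<integral>y. I^3 * (g y * K p y) \<partial>M)"
      unfolding dZ_def by (rule Bochner_Integration.integral_cong) (simp_all add: LI)
    then show ?thesis unfolding a_def by simp
  qed
  have Bv: "B p = (1/2 * I^2) * a"
  proof -
    have "B p = (\<integral>y. (1/2 * I^2) * (g y * K p y) \<partial>M)"
      unfolding B_def by (rule Bochner_Integration.integral_cong) (simp_all add: qB_def p_def I_def g_def power2_eq_square)
    then show ?thesis unfolding a_def by simp
  qed
  have dBv: "dB = - (I^3 * a) + (1/2 * I^5) * c"
  proof -
    have "dB = (\<integral>y. - (I^3 * (g y * K p y)) + (1/2 * I^5) * ((g y * g y) * K p y) \<partial>M)"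
      unfolding dB_def
      by (rule Bochner_Integration.integral_cong)
        (simp_all only: LI, simp_all add: qB'_def qB_def p_def I_def g_def power2_eq_square eval_nat_numeral algebra_simps)
    also have "\<dots> = - (I^3 * a) + (1/2 * I^5) * c"
      using ia ic unfolding a_def c_def by simp
    finally show ?thesis .
  qed
  have zne: "Z (x, \<sigma>) \<noteq> 0" using z by (simp add: z_def p_def)
  have zpos: "0 < Z (x, \<sigma>)" using z by (simp add: z_def p_def)
  have H: "((\<lambda>t. - (B (x, t) / Z (x, t)) - ln (Z (x, t)) + ln \<rho>) has_real_derivative
      (- ((dB * Z (x, \<sigma>) - B (x, \<sigma>) * dZ) / (Z (x, \<sigma>) * Z (x, \<sigma>))) - 1 / Z (x, \<sigma>) * dZ + 0)) (at \<sigma>)"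
    by (intro DERIV_add DERIV_diff DERIV_minus DERIV_divide hB hZ zne DERIV_const
        DERIV_chain2[OF DERIV_ln_divide[OF zpos] hZ])
  have val: "- ((dB * Z (x, \<sigma>) - B (x, \<sigma>) * dZ) / (Z (x, \<sigma>) * Z (x, \<sigma>))) - 1 / Z (x, \<sigma>) * dZ + 0
      = - (I^5 / 2) * (c * z - a^2) / z^2"
    using alg_sign[OF z I, of a c] unfolding dBv dZv Bv[unfolded p_def] z_def p_def by simp
  have vp: "c * z - a^2 > 0"
    using var_pos[OF s, of x] unfolding a_def c_def z_def g_def p_def by simp
  have neg: "- (I^5 / 2) * (c * z - a^2) / z^2 < 0"
    using vp I z by (simp add: divide_neg_pos mult_pos_pos)
  have "((\<lambda>t. G \<rho> (x, t)) has_real_derivative (- (I^5 / 2) * (c * z - a^2) / z^2)) (at \<sigma>)"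
  proof (rule has_field_derivative_transform_within_open[OF H[unfolded val] _ _])
    show "open {0::real<..}" by simp
    show "\<sigma> \<in> {0<..}" using s by simp
    show "- (B (x, t) / Z (x, t)) - ln (Z (x, t)) + ln \<rho> = G \<rho> (x, t)" if "t \<in> {0<..}" for t
      using that F_eq[of t \<rho> x] by (simp add: G_def)
  qed
  with neg show ?thesis by blast
qed

lemma G_dec:
  assumes "0 < s1" "s1 < s2"
  shows "G \<rho> (x, s2) < G \<rho> (x, s1)"
  by (rule DERIV_neg_imp_decreasing[OF assms(2)]) (use assms G_sigma_deriv in auto)

lemma G_nz:
  assumes p: "p \<in> Upos"
  shows "frechet_derivative (G \<rho>) (at p) (0, 1) \<noteq> 0"
proof -
  obtain x s where ps: "p = (x, s)" by (cases p)
  with p have s: "s > 0" by (simp add: Upos_iff)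
  from G_Ck[of 1 \<rho>] p obtain D where D: "(G \<rho> has_derivative D) (at p)" by auto
  have fd: "frechet_derivative (G \<rho>) (at p) = D" using frechet_derivative_at[OF D] by simp
  from partial_sigma[OF D[unfolded ps]] have d1: "((\<lambda>t. G \<rho> (x, t)) has_real_derivative D (0, 1)) (at s)" .
  obtain d where d: "((\<lambda>t. G \<rho> (x, t)) has_real_derivative d) (at s)" "d < 0"
    using G_sigma_deriv[OF s] by blast
  have "D (0, 1) = d" using DERIV_unique[OF d1 d(1)] .
  with d(2) fd show ?thesis by simp
qed

end

context gauss_prob
begin

lemma space_M: "space M = UNIV"
  using sets_eq_imp_space_eq[OF setsM] by simp

lemma cball_sets: "cball x r \<in> sets M"
  unfolding setsM by (rule borel_closed) simp

lemma measure_cball_tendsto: "(\<lambda>n. measure M (cball x (real n))) \<longlonglongrightarrow> 1"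
proof -
  have "(\<lambda>n. measure M (cball x (real n))) \<longlonglongrightarrow> measure M (\<Union>n. cball x (real n))"
  proof (rule finite_Lim_measure_incseq)
    show "range (\<lambda>n. cball x (real n)) \<subseteq> sets M" using cball_sets by auto
    show "incseq (\<lambda>n. cball x (real n))" by (auto simp: incseq_def)
  qed
  moreover have "(\<Union>n. cball x (real n)) = UNIV"
  proof -
    have "y \<in> cball x (real (nat \<lceil>dist x y\<rceil>))" for y
      by (simp add: real_nat_ceiling_ge)
    then show ?thesis by blast
  qed
  ultimately show ?thesis using prob_space space_M by simp
qed

lemma Z_lower:
  assumes s: "\<sigma> > 0"
  shows "Z (x, \<sigma>) \<ge> exp (- R\<^sup>2 / (2 * \<sigma>\<^sup>2)) * measure M (cball x R)"
proof -
  have p: "(x, \<sigma>) \<in> Upos" using s by (simp add: Upos_iff)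
  have "exp (- R\<^sup>2 / (2 * \<sigma>\<^sup>2)) * measure M (cball x R) = (\<integral>y. exp (- R\<^sup>2 / (2 * \<sigma>\<^sup>2)) * indicator (cball x R) y \<partial>M)"
    using space_M by simp
  also have "\<dots> \<le> (\<integral>y. 1 * K (x, \<sigma>) y \<partial>M)"
  proof (rule Bochner_Integration.integral_mono)
    show "integrable M (\<lambda>y. exp (- R\<^sup>2 / (2 * \<sigma>\<^sup>2)) * indicator (cball x R) y)"
    proof (rule integrable_const_bound[where B = "exp (- R\<^sup>2 / (2 * \<sigma>\<^sup>2))"])
      show "(\<lambda>y. exp (- R\<^sup>2 / (2 * \<sigma>\<^sup>2)) * indicator (cball x R) y) \<in> borel_measurable M"
        by (intro borel_measurable_times borel_measurable_const borel_measurable_indicator cball_sets)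
    qed (auto split: split_indicator)
    show "integrable M (\<lambda>y. 1 * K (x, \<sigma>) y)" by (rule hK_int[OF PB_const p])
    fix y
    show "exp (- R\<^sup>2 / (2 * \<sigma>\<^sup>2)) * indicator (cball x R) y \<le> 1 * K (x, \<sigma>) y"
    proof (cases "y \<in> cball x R")
      case True
      then have "norm (x - y) \<le> R" by (simp add: dist_norm)
      then have "(norm (x - y))\<^sup>2 \<le> R\<^sup>2" by (intro power_mono) auto
      then have "- R\<^sup>2 / (2 * \<sigma>\<^sup>2) \<le> - (norm (x - y))\<^sup>2 / (2 * \<sigma>\<^sup>2)"
        using s by (intro divide_right_mono) auto
      then show ?thesis using True by (simp add: K_def)
    next
      case False then show ?thesis by (simp add: K_def)
    qed
  qed
  finally show ?thesis unfolding Z_def .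
qed

lemma B_nonneg: "B p \<ge> 0"
  unfolding B_def qB_def by (intro integral_nonneg_AE AE_I2) (auto simp: K_pos less_imp_le)

lemma E1:
  assumes r: "0 < \<rho>" "\<rho> < 1"
  shows "\<exists>\<sigma>>0. G \<rho> (x, \<sigma>) < 0"
proof -
  from order_tendstoD(1)[OF measure_cball_tendsto[of x] r(2)]
  obtain N where N: "\<rho> < measure M (cball x (real N))" by (auto simp: eventually_sequentially)
  define R where "R = real N"
  define m where "m = measure M (cball x R)"
  have m: "\<rho> < m" using N by (simp add: m_def R_def)
  define \<eta> where "\<eta> = - ln (\<rho> / m)"
  have m1: "m \<le> 1" unfolding m_def by simp
  have \<eta>: "\<eta> > 0" using m r by (simp add: \<eta>_def)
  define \<sigma> where "\<sigma> = sqrt (R\<^sup>2 / \<eta> + 1)"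
  have s: "\<sigma> > 0" unfolding \<sigma>_def by (intro real_sqrt_gt_zero add_nonneg_pos divide_nonneg_pos) (use \<eta> in auto)
  have s2: "\<sigma>\<^sup>2 = R\<^sup>2 / \<eta> + 1" unfolding \<sigma>_def using \<eta> by (simp add: add_nonneg_nonneg)
  have e2: "\<eta> * (2 * \<sigma>\<^sup>2) = 2 * R\<^sup>2 + 2 * \<eta>" unfolding s2 using \<eta> by (simp add: field_simps)
  have "R\<^sup>2 < \<eta> * (2 * \<sigma>\<^sup>2)" unfolding e2 using \<eta> zero_le_power2[of R] by linarith
  then have "R\<^sup>2 / (2 * \<sigma>\<^sup>2) < \<eta>" using s by (simp add: pos_divide_less_eq)
  then have "exp (- \<eta>) < exp (- R\<^sup>2 / (2 * \<sigma>\<^sup>2))" by simp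
  moreover have "exp (- \<eta>) = \<rho> / m" unfolding \<eta>_def using m r by simp
  ultimately have "\<rho> < exp (- R\<^sup>2 / (2 * \<sigma>\<^sup>2)) * m"
    using m r by (simp add: divide_less_eq)
  also have "\<dots> \<le> Z (x, \<sigma>)" unfolding m_def by (rule Z_lower[OF s])
  finally have Zr: "\<rho> < Z (x, \<sigma>)" .
  have Zp: "Z (x, \<sigma>) > 0" using Z_pos s by (simp add: Upos_iff)
  have "G \<rho> (x, \<sigma>) = - B (x, \<sigma>) / Z (x, \<sigma>) - ln (Z (x, \<sigma>)) + ln \<rho>"
    using F_eq[OF s] by (simp add: G_def)
  also have "\<dots> \<le> - ln (Z (x, \<sigma>)) + ln \<rho>"
    using B_nonneg[of "(x, \<sigma>)"] Zp by (simp add: divide_nonneg_pos)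
  also have "\<dots> < 0" using Zr r by simp
  finally show ?thesis using s by blast
qed

end

lemma tendsto_integral_at_AE:
  fixes h :: "'pp::first_countable_topology \<Rightarrow> 'mm \<Rightarrow> real"
  assumes fin: "finite_measure M"
    and ev: "\<forall>\<^sub>F q in at p within S. h q \<in> borel_measurable M \<and> (\<forall>y\<in>space M. \<bar>h q y\<bar> \<le> B)"
    and lim: "AE y in M. ((\<lambda>q. h q y) \<longlongrightarrow> g y) (at p within S)"
    and gm: "g \<in> borel_measurable M"
  shows "((\<lambda>q. \<integral>y. h q y \<partial>M) \<longlongrightarrow> (\<integral>y. g y \<partial>M)) (at p within S)"
  unfolding tendsto_at_iff_sequentially
proof (intro allI impI)
  interpret finite_measure M by fact
  fix X :: "nat \<Rightarrow> 'pp" assume X: "\<forall>i. X i \<in> S - {p}" "X \<longlonglongrightarrow> p"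
  have fX: "filterlim X (at p within S) sequentially"
    using X by (auto simp: filterlim_at)
  from filterlim_iff[THEN iffD1, OF fX, rule_format, OF ev]
  obtain N where N: "\<And>n. N \<le> n \<Longrightarrow> h (X n) \<in> borel_measurable M \<and> (\<forall>y\<in>space M. \<bar>h (X n) y\<bar> \<le> B)"
    by (auto simp: eventually_sequentially)
  have "(\<lambda>n. \<integral>y. h (X (n + N)) y \<partial>M) \<longlonglongrightarrow> (\<integral>y. g y \<partial>M)"
  proof (rule integral_dominated_convergence[where w="\<lambda>_. B"])
    show "g \<in> borel_measurable M" by fact
    show "h (X (n + N)) \<in> borel_measurable M" for n using N[of "n + N"] by simp
    show "integrable M (\<lambda>_. B)" by simp
    show "AE y in M. (\<lambda>n. h (X (n + N)) y) \<longlonglongrightarrow> g y"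
      using lim
    proof eventually_elim
      case (elim y)
      have "(\<lambda>n. h (X n) y) \<longlonglongrightarrow> g y"
        using filterlim_compose[OF elim fX] by (simp add: o_def)
      then show "(\<lambda>n. h (X (n + N)) y) \<longlonglongrightarrow> g y"
        by (rule LIMSEQ_ignore_initial_segment)
    qed
    show "AE y in M. norm (h (X (n + N)) y) \<le> B" for n
      using N[of "n + N"] by (auto intro!: AE_I2)
  qed
  then show "((\<lambda>q. \<integral>y. h q y \<partial>M) \<circ> X) \<longlonglongrightarrow> (\<integral>y. g y \<partial>M)"
    unfolding o_def by (rule LIMSEQ_offset)
qed

context gauss_prob
begin

lemma D_int: "measure M (cball x t) = (\<integral>y. indicator (cball x t) y \<partial>M)"
  using space_M by simp

lemma D_cont: "continuous_on UNIV (\<lambda>t. measure M (cball x t))"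
proof (intro continuous_at_imp_continuous_on ballI)
  fix t0 :: real
  show "isCont (\<lambda>t. measure M (cball x t)) t0"
    unfolding isCont_def D_int
  proof (rule tendsto_integral_at_AE[OF finite_measure_axioms, where B = 1])
    show "\<forall>\<^sub>F t in at t0. (\<lambda>y. indicator (cball x t) y :: real) \<in> borel_measurable M \<and> (\<forall>y\<in>space M. \<bar>indicator (cball x t) y :: real\<bar> \<le> 1)"
      by (intro always_eventually allI conjI borel_measurable_indicator cball_sets) (auto split: split_indicator)
    show "(\<lambda>y. indicator (cball x t0) y :: real) \<in> borel_measurable M"
      by (intro borel_measurable_indicator cball_sets)
    show "AE y in M. ((\<lambda>t. indicator (cball x t) y :: real) \<longlongrightarrow> indicator (cball x t0) y) (at t0)"
      using AE_not_in[OF sph[of x t0]]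
    proof eventually_elim
      case (elim y)
      then have ne: "dist x y \<noteq> t0" by simp
      have tI: "((\<lambda>t::real. t) \<longlongrightarrow> t0) (at t0)" by (rule tendsto_ident_at)
      show ?case
      proof (cases "dist x y < t0")
        case True
        have "\<forall>\<^sub>F t in at t0. dist x y < t" by (rule order_tendstoD(1)[OF tI True])
        then have "\<forall>\<^sub>F t in at t0. (indicator (cball x t) y :: real) = indicator (cball x t0) y"
          by eventually_elim (use True in \<open>simp add: indicator_def\<close>)
        then show ?thesis by (rule tendsto_eventually)
      next
        case False
        with ne have F: "t0 < dist x y" by simp
        have "\<forall>\<^sub>F t in at t0. t < dist x y" by (rule order_tendstoD(2)[OF tI F])
        then have "\<forall>\<^sub>F t in at t0. (indicator (cball x t) y :: real) = indicator (cball x t0) y"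
          by eventually_elim (use F in \<open>simp add: indicator_def\<close>)
        then show ?thesis by (rule tendsto_eventually)
      qed
    qed
  qed
qed

lemma D_zero: "measure M (cball x 0) = 0"
proof -
  have "cball x 0 = sphere x 0" by auto
  then show ?thesis using null_setsD1[OF sph[of x 0]] by (simp add: measure_def)
qed

lemma quantile:
  assumes e: "0 < \<epsilon>" "\<epsilon> < 1"
  shows "\<exists>r r'. 0 \<le> r' \<and> r' < r \<and> measure M (cball x r) = \<epsilon> \<and> 0 < measure M (cball x r')"
proof -
  from order_tendstoD(1)[OF measure_cball_tendsto[of x] e(2)]
  obtain N where N: "\<epsilon> < measure M (cball x (real N))" by (auto simp: eventually_sequentially)
  have "\<exists>r. 0 \<le> r \<and> r \<le> real N \<and> measure M (cball x r) = \<epsilon>"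
  proof (rule IVT')
    show "continuous_on {0..real N} (\<lambda>t. measure M (cball x t))"
      by (rule continuous_on_subset[OF D_cont]) simp
  qed (use N D_zero e in auto)
  then obtain r where r: "0 \<le> r" "measure M (cball x r) = \<epsilon>" by blast
  have rpos: "r > 0" using r D_zero[of x] e by (cases "r = 0") auto
  have "((\<lambda>t. measure M (cball x t)) \<longlongrightarrow> measure M (cball x r)) (at_left r)"
    using D_cont[of x] by (simp add: continuous_on_def filterlim_at_split)
  then have "\<forall>\<^sub>F t in at_left r. \<epsilon> / 2 < measure M (cball x t)"
    by (rule order_tendstoD(1)) (use r e in simp)
  moreover have "\<forall>\<^sub>F t in at_left r. t \<in> {r - 1<..<r}" by (rule eventually_at_left_real) simp
  ultimately have "\<forall>\<^sub>F t in at_left r. \<epsilon> / 2 < measure M (cball x t) \<and> t < r"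
    by eventually_elim auto
  then obtain r' where r': "\<epsilon> / 2 < measure M (cball x r')" "r' < r"
    using eventually_happens[of _ "at_left r"] trivial_limit_at_left_real by blast
  have "0 \<le> r'"
  proof (rule ccontr)
    assume "\<not> 0 \<le> r'"
    then have "cball x r' = {}" by simp
    with r' e show False by simp
  qed
  with r' r e show ?thesis by (intro exI[of _ r] exI[of _ r']) auto
qed

end

lemma wlnw_lower:
  fixes w L :: real
  assumes "w > 0" "L > 0"
  shows "w * ln L - L \<le> w * ln w"
proof -
  have "ln (L / w) \<le> L / w - 1" by (rule ln_le_minus_one) (use assms in simp)
  then have "ln L - ln w \<le> L / w - 1" using assms by (simp add: ln_div)
  then have "w * (ln L - ln w) \<le> w * (L / w - 1)" using assms by (intro mult_left_mono) auto
  then have "w * ln L - w * ln w \<le> L - w" using assms by (simp add: algebra_simps)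
  then show ?thesis using assms by linarith
qed

context gauss_prob
begin

lemma E2:
  assumes rho: "0 < \<rho>" "\<rho> < 1"
  shows "\<exists>\<sigma>>0. G \<rho> (x, \<sigma>) > 0"
proof -
  define L where "L = exp (2 * (3 - ln \<rho>))"
  have lnL: "ln L = 2 * (3 - ln \<rho>)" unfolding L_def by simp
  have lnr: "ln \<rho> < 0" using rho by simp
  have L1: "L > 1" unfolding L_def using lnr by simp
  define \<epsilon> where "\<epsilon> = 1 / L"
  have eps: "0 < \<epsilon>" "\<epsilon> < 1" using L1 by (auto simp: \<epsilon>_def)
  obtain r r' where rr: "0 \<le> r'" "r' < r" "measure M (cball x r) = \<epsilon>" "0 < measure M (cball x r')"
    using quantile[OF eps] by blast
  define \<delta> where "\<delta> = measure M (cball x r')"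
  have \<delta>: "0 < \<delta>" "\<delta> \<le> 1" using rr by (auto simp: \<delta>_def)
  define lm where "lm = ln (2 / \<delta>)"
  have lm: "lm > 0" unfolding lm_def using \<delta> by simp
  have rr2: "r'\<^sup>2 < r\<^sup>2" using rr by (intro power_strict_mono) auto
  define \<sigma> where "\<sigma> = sqrt ((r\<^sup>2 - r'\<^sup>2) / (2 * lm))"
  have s: "\<sigma> > 0" unfolding \<sigma>_def using lm rr2 by simp
  have s2: "\<sigma>\<^sup>2 = (r\<^sup>2 - r'\<^sup>2) / (2 * lm)" unfolding \<sigma>_def using lm rr2 by simp
  have lam: "(r\<^sup>2 - r'\<^sup>2) / (2 * \<sigma>\<^sup>2) = lm" unfolding s2 using lm rr2 by (simp add: field_simps)
  define p where "p = (x, \<sigma>)"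
  have p: "p \<in> Upos" using s by (simp add: p_def Upos_iff)
  define z where "z = Z p"
  have z: "z > 0" unfolding z_def by (rule Z_pos[OF p])
  define A where "A = cball x r"
  have Asets: "A \<in> sets M" unfolding A_def by (rule cball_sets)
  have Acsets: "UNIV - A \<in> sets M" using sets.compl_sets[OF Asets] space_M by simp
  have iK: "integrable M (\<lambda>y. 1 * K p y)" by (rule hK_int[OF PB_const p])
  have iA: "integrable M (\<lambda>y. indicator A y * (1 * K p y))"
    using integrable_mult_indicator[OF Asets iK] by simp
  have iAc: "integrable M (\<lambda>y. indicator (UNIV - A) y * (1 * K p y))"
    using integrable_mult_indicator[OF Acsets iK] by simp
  define H where "H = (\<integral>y. indicator A y * (1 * K p y) \<partial>M)"
  define T where "T = (\<integral>y. indicator (UNIV - A) y * (1 * K p y) \<partial>M)"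
  have HT: "H + T = z"
  proof -
    have "H + T = (\<integral>y. indicator A y * (1 * K p y) + indicator (UNIV - A) y * (1 * K p y) \<partial>M)"
      unfolding H_def T_def using iA iAc by simp
    also have "\<dots> = (\<integral>y. 1 * K p y \<partial>M)"
      by (rule Bochner_Integration.integral_cong) (auto split: split_indicator)
    finally show ?thesis unfolding z_def Z_def .
  qed
  have Tb: "T \<le> exp (- r\<^sup>2 / (2 * \<sigma>\<^sup>2))"
  proof -
    have "T \<le> (\<integral>y. exp (- r\<^sup>2 / (2 * \<sigma>\<^sup>2)) \<partial>M)"
      unfolding T_def
    proof (rule Bochner_Integration.integral_mono[OF iAc])
      show "integrable M (\<lambda>y. exp (- r\<^sup>2 / (2 * \<sigma>\<^sup>2)))" by simp
      fix y
      show "indicator (UNIV - A) y * (1 * K p y) \<le> exp (- r\<^sup>2 / (2 * \<sigma>\<^sup>2))"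
      proof (cases "y \<in> A")
        case True then show ?thesis by simp
      next
        case False
        then have "r < norm (x - y)" unfolding A_def by (simp add: dist_norm)
        then have "r\<^sup>2 \<le> (norm (x - y))\<^sup>2" using rr by (intro power_mono) auto
        then have "- (norm (x - y))\<^sup>2 / (2 * \<sigma>\<^sup>2) \<le> - r\<^sup>2 / (2 * \<sigma>\<^sup>2)"
          using s by (intro divide_right_mono) auto
        with False show ?thesis by (simp add: K_def p_def)
      qed
    qed
    also have "\<dots> = exp (- r\<^sup>2 / (2 * \<sigma>\<^sup>2))" using prob_space by simp
    finally show ?thesis .
  qed
  have Zl: "z \<ge> exp (- r'\<^sup>2 / (2 * \<sigma>\<^sup>2)) * \<delta>"
    unfolding z_def p_def \<delta>_def by (rule Z_lower[OF s])
  have fr: "T / z \<le> exp (- r\<^sup>2 / (2 * \<sigma>\<^sup>2)) / (exp (- r'\<^sup>2 / (2 * \<sigma>\<^sup>2)) * \<delta>)"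
  proof (rule frac_le)
    show "0 \<le> exp (- r\<^sup>2 / (2 * \<sigma>\<^sup>2))" by simp
    show "T \<le> exp (- r\<^sup>2 / (2 * \<sigma>\<^sup>2))" by (rule Tb)
    show "0 < exp (- r'\<^sup>2 / (2 * \<sigma>\<^sup>2)) * \<delta>" using \<delta> by simp
    show "exp (- r'\<^sup>2 / (2 * \<sigma>\<^sup>2)) * \<delta> \<le> z" by (rule Zl)
  qed
  have ed: "exp (- r\<^sup>2 / (2 * \<sigma>\<^sup>2)) / exp (- r'\<^sup>2 / (2 * \<sigma>\<^sup>2)) = exp (- r\<^sup>2 / (2 * \<sigma>\<^sup>2) - - r'\<^sup>2 / (2 * \<sigma>\<^sup>2))"
    by (rule exp_diff[symmetric])
  have ed2: "- r\<^sup>2 / (2 * \<sigma>\<^sup>2) - - r'\<^sup>2 / (2 * \<sigma>\<^sup>2) = - ((r\<^sup>2 - r'\<^sup>2) / (2 * \<sigma>\<^sup>2))"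
    by (simp add: diff_divide_distrib)
  have e1: "exp (- r\<^sup>2 / (2 * \<sigma>\<^sup>2)) / (exp (- r'\<^sup>2 / (2 * \<sigma>\<^sup>2)) * \<delta>) = exp (- lm) / \<delta>"
  proof -
    have "exp (- r\<^sup>2 / (2 * \<sigma>\<^sup>2)) / (exp (- r'\<^sup>2 / (2 * \<sigma>\<^sup>2)) * \<delta>)
        = (exp (- r\<^sup>2 / (2 * \<sigma>\<^sup>2)) / exp (- r'\<^sup>2 / (2 * \<sigma>\<^sup>2))) / \<delta>"
      by (rule divide_divide_eq_left[symmetric])
    also have "\<dots> = exp (- lm) / \<delta>" unfolding ed ed2 lam ..
    finally show ?thesis .
  qed
  have e2: "exp (- lm) = \<delta> / 2" unfolding lm_def using \<delta> by (simp add: exp_minus)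
  have Tz: "T / z \<le> 1 / 2"
  proof -
    have "T / z \<le> exp (- lm) / \<delta>" using fr unfolding e1 .
    also have "\<dots> = 1 / 2" unfolding e2 using \<delta> by simp
    finally show ?thesis .
  qed
  have Hz: "H / z \<ge> 1 / 2"
  proof -
    have "H / z = 1 - T / z" using HT z by (simp add: field_simps)
    with Tz show ?thesis by simp
  qed
  have Zd: "(\<integral>z. exp (- (norm (x - z))\<^sup>2 / (2 * \<sigma>\<^sup>2)) \<partial>M) = z"
    unfolding z_def Z_def K_def p_def by simp
  have w0: "gauss_w M x \<sigma> y = K p y / z" for y
    unfolding gauss_w_def Zd by (simp add: K_def p_def)
  have w: "gauss_w M x \<sigma> y = inverse z * (1 * K p y)" for y
    unfolding w0 by (simp add: divide_inverse)
  have lnw: "ln (gauss_w M x \<sigma> y) = - qB p y - ln z" for y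
  proof -
    have "ln (gauss_w M x \<sigma> y) = ln (K p y / z)" unfolding w0 ..
    also have "\<dots> = ln (K p y) - ln z" using z K_pos[of p y] by (simp add: ln_div)
    also have "ln (K p y) = - qB p y" unfolding K_def qB_def p_def using s
      by (simp add: field_simps power2_eq_square)
    finally show ?thesis .
  qed
  have i1: "integrable M (\<lambda>y. qB p y * K p y)" by (rule hK_int[OF PB_qB p])
  have wl_eq: "gauss_w M x \<sigma> y * ln (gauss_w M x \<sigma> y) = (- inverse z) * (qB p y * K p y) - (ln z * inverse z) * (1 * K p y)" for y
    unfolding lnw unfolding w by (simp add: algebra_simps)
  have iw: "integrable M (\<lambda>y. gauss_w M x \<sigma> y * ln (gauss_w M x \<sigma> y))"
    unfolding wl_eq by (intro Bochner_Integration.integrable_diff integrable_mult_right i1 iK)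
  define f where "f y = ln L * (indicator A y * (inverse z * (1 * K p y))) - L * indicator A y - 1" for y
  have iAw: "integrable M (\<lambda>y. indicator A y * (inverse z * (1 * K p y)))"
    using integrable_mult_indicator[OF Asets integrable_mult_right[OF iK, of "inverse z"]] by simp
  have iInd: "integrable M (\<lambda>y. indicator A y :: real)"
  proof (rule integrable_const_bound[where B = 1])
    show "(\<lambda>y. indicator A y :: real) \<in> borel_measurable M" by (rule borel_measurable_indicator[OF Asets])
  qed (simp split: split_indicator)
  have iF: "integrable M f" unfolding f_def
    by (intro Bochner_Integration.integrable_diff integrable_mult_right iAw iInd finite_measure.integrable_const finite_measure_axioms)
  have intf: "(\<integral>y. f y \<partial>M) = ln L * (H / z) - L * \<epsilon> - 1"
  proof -
    have "(\<integral>y. f y \<partial>M) = ln L * (\<integral>y. indicator A y * (inverse z * (1 * K p y)) \<partial>M) - L * (\<integral>y. indicator A y \<partial>M) - 1"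
      unfolding f_def using iAw iInd prob_space by simp
    also have "(\<integral>y. indicator A y * (inverse z * (1 * K p y)) \<partial>M) = inverse z * H"
      unfolding H_def by (simp add: algebra_simps)
    also have "(\<integral>y. indicator A y \<partial>M) = \<epsilon>" using rr(3) space_M unfolding A_def by simp
    finally show ?thesis by (simp add: divide_inverse mult.commute)
  qed
  have fle: "f y \<le> gauss_w M x \<sigma> y * ln (gauss_w M x \<sigma> y)" for y
  proof -
    define v where "v = inverse z * (1 * K p y)"
    have v: "v > 0" unfolding v_def using z K_pos[of p y] by simp
    show ?thesis
    proof (cases "y \<in> A")
      case True
      have "f y = v * ln L - L - 1" unfolding f_def v_def using True by simp
      also have "\<dots> \<le> v * ln v" using wlnw_lower[OF v, of L] L1 by simp
      finally show ?thesis unfolding w v_def .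
    next
      case False
      have "f y = -1" unfolding f_def using False by simp
      also have "\<dots> \<le> v * ln v" using wlnw_lower[OF v, of 1] by simp
      finally show ?thesis unfolding w v_def .
    qed
  qed
  have "(\<integral>y. f y \<partial>M) \<le> (\<integral>y. gauss_w M x \<sigma> y * ln (gauss_w M x \<sigma> y) \<partial>M)"
    by (rule Bochner_Integration.integral_mono[OF iF iw fle])
  moreover have "ln L * (H / z) \<ge> 3 - ln \<rho>"
  proof -
    have "ln L * (H / z) \<ge> ln L * (1 / 2)" using Hz lnL lnr by (intro mult_left_mono) auto
    then show ?thesis unfolding lnL by simp
  qed
  moreover have "L * \<epsilon> = 1" unfolding \<epsilon>_def using L1 by simp
  ultimately have "(\<integral>y. gauss_w M x \<sigma> y * ln (gauss_w M x \<sigma> y) \<partial>M) \<ge> (3 - ln \<rho>) - 2"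
    unfolding intf by linarith
  then have "F_fun \<rho> M x \<sigma> > 0" unfolding F_fun_def by linarith
  then show ?thesis using s by (auto simp: G_def)
qed

end

theorem proposition2p2:
  fixes \<mu> :: "'a::euclidean_space measure"
    and f :: "'a \<Rightarrow> real"
    and f' :: "'a \<Rightarrow> 'a \<Rightarrow>\<^sub>L real"
  assumes prob: "prob_space \<mu>"
    and dens: "\<mu> = density lborel (\<lambda>x. ennreal (f x))"
    and nonneg: "\<And>x. f x \<ge> 0"
    and deriv: "\<And>x. (f has_derivative blinfun_apply (f' x)) (at x)"
    and C1: "continuous_on UNIV f'"
    and fbdd: "bounded (range f)"
    and gradbdd: "bounded (range (\<lambda>x. norm (f' x)))"
  shows "\<forall>\<rho>\<in>{0<..<1}.
           (\<forall>x. \<exists>!\<sigma>. \<sigma> > 0 \<and> F_fun \<rho> \<mu> x \<sigma> = 0) \<and>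
           smooth_on UNIV (\<lambda>x. THE \<sigma>. \<sigma> > 0 \<and> F_fun \<rho> \<mu> x \<sigma> = 0)"
proof -
  have setsM: "sets \<mu> = sets borel" unfolding dens by simp
  have fcont: "continuous_on UNIV f"
    using deriv by (auto intro!: continuous_at_imp_continuous_on dest: has_derivative_continuous)
  have fmeas: "(\<lambda>x. ennreal (f x)) \<in> borel_measurable lborel"
    using borel_measurable_continuous_onI[OF fcont] by simp
  have sph: "sphere c r \<in> null_sets \<mu>" for c :: 'a and r
  proof -
    from negligible_sphere[of c r] have N: "sphere c r \<in> null_sets lborel"
      by (auto simp: null_sets_completion_iff negligible_iff_null_sets negligible_convex_frontier)
    then have "AE x in lborel. x \<notin> sphere c r" by (rule AE_not_in)
    then have "AE x in lborel. x \<in> sphere c r \<longrightarrow> ennreal (f x) = 0" by (rule AE_mp) auto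
    with N have "sphere c r \<in> null_sets (density lborel (\<lambda>x. ennreal (f x)))"
      by (subst null_sets_density_iff[OF fmeas]) auto
    then show ?thesis using dens by simp
  qed
  interpret gauss_prob \<mu>
    by (rule gauss_prob.intro[OF gauss_int.intro[OF prob_space.finite_measure[OF prob] setsM] prob gauss_prob_axioms.intro])
      (rule sph)
  show ?thesis
  proof (intro ballI conjI allI)
    fix \<rho> :: real assume "\<rho> \<in> {0<..<1}"
    then have r: "0 < \<rho>" "\<rho> < 1" by auto
    have Geq: "G \<rho> (x, s) = F_fun \<rho> \<mu> x s" for x s by (simp add: G_def)
    have ex: "\<exists>s>0. G \<rho> (x, s) = 0" for x
    proof -
      obtain s1 where s1: "s1 > 0" "G \<rho> (x, s1) > 0" using E2[OF r] by blast
      obtain s2 where s2: "s2 > 0" "G \<rho> (x, s2) < 0" using E1[OF r] by blast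
      have le: "s1 \<le> s2"
      proof (rule ccontr)
        assume "\<not> s1 \<le> s2"
        then have "G \<rho> (x, s1) < G \<rho> (x, s2)" using G_dec[of s2 s1 \<rho> x] s2 by simp
        with s1 s2 show False by simp
      qed
      have cont: "continuous_on {s1..s2} (\<lambda>t. G \<rho> (x, t))"
      proof (intro continuous_at_imp_continuous_on ballI)
        fix t assume "t \<in> {s1..s2}"
        then have "t > 0" using s1 by simp
        then obtain d where "((\<lambda>t. G \<rho> (x, t)) has_real_derivative d) (at t)"
          using G_sigma_deriv by blast
        then show "isCont (\<lambda>t. G \<rho> (x, t)) t" by (rule DERIV_isCont)
      qed
      obtain s where s: "s1 \<le> s" "s \<le> s2" "G \<rho> (x, s) = 0"
        using IVT2'[of "\<lambda>t. G \<rho> (x, t)" s2 0 s1, OF _ _ le cont] s1 s2 by auto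
      then show ?thesis using s1 by (intro exI[of _ s]) auto
    qed
    show "\<exists>!\<sigma>. \<sigma> > 0 \<and> F_fun \<rho> \<mu> x \<sigma> = 0" for x
    proof -
      obtain s where s: "s > 0" "G \<rho> (x, s) = 0" using ex by blast
      have "t = s" if "t > 0" "G \<rho> (x, t) = 0" for t
        using G_dec[of s t \<rho> x] G_dec[of t s \<rho> x] that s by (cases s t rule: linorder_cases) auto
      with s show ?thesis unfolding Geq[symmetric] by blast
    qed
    show "smooth_on UNIV (\<lambda>x. THE \<sigma>. \<sigma> > 0 \<and> F_fun \<rho> \<mu> x \<sigma> = 0)"
      unfolding smooth_on_def
    proof
      fix k
      have "Ck_on k UNIV (\<lambda>x. THE s. s > 0 \<and> G \<rho> (x, s) = 0)"
      proof (rule smooth_implicit)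
        show "Ck_on n (UNIV \<times> {0<..}) (G \<rho>)" for n using G_Ck[of n \<rho>] by (simp add: Upos_def)
        show "G \<rho> (x, s2) < G \<rho> (x, s1)" if "0 < s1" "s1 < s2" for x s1 s2 using G_dec that by blast
        show "\<exists>s>0. G \<rho> (x, s) = 0" for x by (rule ex)
        show "frechet_derivative (G \<rho>) (at p) (0, 1) \<noteq> 0" if "p \<in> UNIV \<times> {0<..}" for p
          using G_nz that by (simp add: Upos_def)
      qed
      then show "Ck_on k UNIV (\<lambda>x. THE \<sigma>. \<sigma> > 0 \<and> F_fun \<rho> \<mu> x \<sigma> = 0)" by (simp add: Geq)
    qed
  qed
qed

end
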